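(* Let $E$ be a directed graph and let $(H,S)$ be a reflexive admissible pair of $E$. Then $E$ is all-reflexive if and only if the quotient graph $E/(H,S)$ and the porcupine graph $P_{(H,S)}$ are both all-reflexive. The statement continues to hold if "all-reflexive" is replaced everywhere by "strongly all-reflexive".
   Context: $E$ is an arbitrary directed graph with vertex set $E^0$, edge set $E^1$, source map $\mathbf{s}$ and range map $\mathbf{r}$. For a set of vertices $V$, the root of $V$ is $R(V)=\{u\in E^0\mid u\geq v \text{ for some } v\in V\}$, where $u\geq v$ means there is a path from $u$ to $v$. A set $H\subseteq E^0$ is hereditary if the range of every path with source in $H$ is in $H$, and saturated if every regular vertex (neither a sink nor an infinite emitter) $v$ with $\mathbf{r}(\mathbf{s}^{-1}(v))\subseteq H$ lies in $H$. For $H$ hereditary and saturated, the set of breaking vertices is $B_H=\{v\in E^0-H\mid v$ is an infinite emitter and $\mathbf{s}^{-1}(v)\cap\mathbf{r}^{-1}(E^0-H)$ is nonempty and finite$\}$. An admissible pair is $(H,S)$ with $H$ hereditary and saturated and $S\subseteq B_H$. Define $H^\bot=E^0-R(H)$ and $S^\bot=B_{H^\bot}-S$; then $(H^\bot,S^\bot)$ is an admissible pair, and $(H,S)$ is called reflexive if $(H,S)=(H^{\bot\bot},S^{\bot\bot})$ (equivalently, $R(H)-H\subseteq R(H^\bot)$ and $S=B_H$). The quotient graph $E/(H,S)$ has vertices $(E^0-H)\cup\{v'\mid v\in B_H-S\}$ and edges $\{e\in E^1\mid \mathbf{r}(e)\notin H\}\cup\{e'\mid e\in E^1,\ \mathbf{r}(e)\in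 B_H-S\}$, with $\mathbf{s},\mathbf{r}$ as in $E$ on the old edges and $\mathbf{s}(e')=\mathbf{s}(e)$, $\mathbf{r}(e')=\mathbf{r}(e)'$. The porcupine graph $P_{(H,S)}$: let $F_1(H,S)$ be the set of paths $e_1\ldots e_n$ of $E$ with $\mathbf{r}(e_n)\in H$ and $\mathbf{s}(e_n)\notin H\cup S$, and $F_2(H,S)$ the set of paths $p$ of positive length with $\mathbf{r}(p)\in S$. For each edge $e\in F_1(H,S)\cup F_2(H,S)$ add a new vertex $w^e$ and a new edge $f^e$ with $\mathbf{s}(f^e)=w^e$, $\mathbf{r}(f^e)=\mathbf{r}(e)$; inductively, for each path $p=eq$ in $F_1(H,S)\cup F_2(H,S)$ with $|q|\geq 1$ add a new vertex $w^p$ and a new edge $f^p$ with $\mathbf{s}(f^p)=w^p$, $\mathbf{r}(f^p)=w^q$. The vertices of $P_{(H,S)}$ are $H\cup S\cup\{w^p\mid p\in F_1(H,S)\cup F_2(H,S)\}$, and its edges are $\{e\in E^1\mid \mathbf{s}(e)\in H\}\cup\{e\in E^1\mid \mathbf{s}(e)\in S,\ \mathbf{r}(e)\in H\}\cup\{f^p\mid p\in F_1(H,S)\cup F_2(H,S)\}$, with $\mathbf{s},\mathbf{r}$ as in $E$ on common edges. A cycle is a closed path whose distinct edges have distinct sources; an exit of a cycle is an edge not on the cycle whose source is on the cycle. A cycle $c$ is extreme if it has exits and for every path $p$ with $\mathbf{s}(p)$ on $c$ there is a path $q$ from $\mathbf{r}(p)$ to a vertex of $c$. A graph is all-reflexive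 if (a) each cycle is either without exits or extreme, (b) each infinite emitter lies on a cycle, and (c) for each infinite path $\alpha$ with vertex set $\alpha^0$, only finitely many edges $e$ with $\mathbf{s}(e)\in\alpha^0$ satisfy $\mathbf{r}(e)\notin R(\alpha^0)$. (Equivalently, every admissible pair of the graph is reflexive.) A graph is strongly all-reflexive if it is all-reflexive and has no cycles without exits. *)

theory Defs
  imports Main
begin

record ('v, 'e) dgraph =
  verts :: "'v set"
  edges :: "'e set"
  src :: "'e \<Rightarrow> 'v"
  rng :: "'e \<Rightarrow> 'v"

definition wf_dgraph :: "('v, 'e) dgraph \<Rightarrow> bool" where
  "wf_dgraph G \<longleftrightarrow> (\<forall>e \<in> edges G. src G e \<in> verts G \<and> rng G e \<in> verts G)"

definition is_path :: "('v, 'e) dgraph \<Rightarrow> 'e list \<Rightarrow> bool" where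
  "is_path G p \<longleftrightarrow> p \<noteq> [] \<and> set p \<subseteq> edges G \<and>
     (\<forall>i. Suc i < length p \<longrightarrow> rng G (p ! i) = src G (p ! Suc i))"

definition path_src :: "('v, 'e) dgraph \<Rightarrow> 'e list \<Rightarrow> 'v" where
  "path_src G p = src G (hd p)"

definition path_rng :: "('v, 'e) dgraph \<Rightarrow> 'e list \<Rightarrow> 'v" where
  "path_rng G p = rng G (last p)"

definition geq :: "('v, 'e) dgraph \<Rightarrow> 'v \<Rightarrow> 'v \<Rightarrow> bool" where
  "geq G u v \<longleftrightarrow> (u = v \<and> u \<in> verts G) \<or>
     (\<exists>p. is_path G p \<and> path_src G p = u \<and> path_rng G p = v)"

definition root :: "('v, 'e) dgraph \<Rightarrow> 'v set \<Rightarrow> 'v set" where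
  "root G V = {u \<in> verts G. \<exists>v \<in> V. geq G u v}"

definition out_edges :: "('v, 'e) dgraph \<Rightarrow> 'v \<Rightarrow> 'e set" where
  "out_edges G v = {e \<in> edges G. src G e = v}"

definition is_sink :: "('v, 'e) dgraph \<Rightarrow> 'v \<Rightarrow> bool" where
  "is_sink G v \<longleftrightarrow> out_edges G v = {}"

definition inf_emitter :: "('v, 'e) dgraph \<Rightarrow> 'v \<Rightarrow> bool" where
  "inf_emitter G v \<longleftrightarrow> infinite (out_edges G v)"

definition regular :: "('v, 'e) dgraph \<Rightarrow> 'v \<Rightarrow> bool" where
  "regular G v \<longleftrightarrow> \<not> is_sink G v \<and> \<not> inf_emitter G v"

definition hereditary :: "('v, 'e) dgraph \<Rightarrow> 'v set \<Rightarrow> bool" where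
  "hereditary G H \<longleftrightarrow> H \<subseteq> verts G \<and>
     (\<forall>p. is_path G p \<and> path_src G p \<in> H \<longrightarrow> path_rng G p \<in> H)"

definition saturated :: "('v, 'e) dgraph \<Rightarrow> 'v set \<Rightarrow> bool" where
  "saturated G H \<longleftrightarrow>
     (\<forall>v \<in> verts G. regular G v \<and> rng G ` out_edges G v \<subseteq> H \<longrightarrow> v \<in> H)"

definition breaking :: "('v, 'e) dgraph \<Rightarrow> 'v set \<Rightarrow> 'v set" where
  "breaking G H = {v \<in> verts G - H. inf_emitter G v \<and>
     {e \<in> out_edges G v. rng G e \<in> verts G - H} \<noteq> {} \<and>
     finite {e \<in> out_edges G v. rng G e \<in> verts G - H}}"

definition admissible :: "('v, 'e) dgraph \<Rightarrow> 'v set \<Rightarrow> 'v set \<Rightarrow> bool" where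
  "admissible G H S \<longleftrightarrow> hereditary G H \<and> saturated G H \<and> S \<subseteq> breaking G H"

definition perpH :: "('v, 'e) dgraph \<Rightarrow> 'v set \<Rightarrow> 'v set" where
  "perpH G H = verts G - root G H"

definition perpS :: "('v, 'e) dgraph \<Rightarrow> 'v set \<Rightarrow> 'v set \<Rightarrow> 'v set" where
  "perpS G H S = breaking G (perpH G H) - S"

definition reflexive_pair :: "('v, 'e) dgraph \<Rightarrow> 'v set \<Rightarrow> 'v set \<Rightarrow> bool" where
  "reflexive_pair G H S \<longleftrightarrow> admissible G H S \<and>
     H = perpH G (perpH G H) \<and> S = perpS G (perpH G H) (perpS G H S)"

definition is_cycle :: "('v, 'e) dgraph \<Rightarrow> 'e list \<Rightarrow> bool" where
  "is_cycle G c \<longleftrightarrow> is_path G c \<and> path_src G c = path_rng G c \<and> distinct (map (src G) c)"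

definition cycle_verts :: "('v, 'e) dgraph \<Rightarrow> 'e list \<Rightarrow> 'v set" where
  "cycle_verts G c = src G ` set c"

definition is_exit :: "('v, 'e) dgraph \<Rightarrow> 'e list \<Rightarrow> 'e \<Rightarrow> bool" where
  "is_exit G c e \<longleftrightarrow> e \<in> edges G \<and> e \<notin> set c \<and> src G e \<in> cycle_verts G c"

definition has_exit :: "('v, 'e) dgraph \<Rightarrow> 'e list \<Rightarrow> bool" where
  "has_exit G c \<longleftrightarrow> (\<exists>e. is_exit G c e)"

definition extreme_cycle :: "('v, 'e) dgraph \<Rightarrow> 'e list \<Rightarrow> bool" where
  "extreme_cycle G c \<longleftrightarrow> has_exit G c \<and>
     (\<forall>p. is_path G p \<and> path_src G p \<in> cycle_verts G c \<longrightarrow>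
        (\<exists>w \<in> cycle_verts G c. geq G (path_rng G p) w))"

definition is_inf_path :: "('v, 'e) dgraph \<Rightarrow> (nat \<Rightarrow> 'e) \<Rightarrow> bool" where
  "is_inf_path G \<alpha> \<longleftrightarrow> (\<forall>i. \<alpha> i \<in> edges G \<and> rng G (\<alpha> i) = src G (\<alpha> (Suc i)))"

definition inf_path_verts :: "('v, 'e) dgraph \<Rightarrow> (nat \<Rightarrow> 'e) \<Rightarrow> 'v set" where
  "inf_path_verts G \<alpha> = range (\<lambda>i. src G (\<alpha> i))"

definition all_reflexive :: "('v, 'e) dgraph \<Rightarrow> bool" where
  "all_reflexive G \<longleftrightarrow>
     (\<forall>c. is_cycle G c \<longrightarrow> \<not> has_exit G c \<or> extreme_cycle G c) \<and>
     (\<forall>v \<in> verts G. inf_emitter G v \<longrightarrow> (\<exists>c. is_cycle G c \<and> v \<in> cycle_verts G c)) \<and>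
     (\<forall>\<alpha>. is_inf_path G \<alpha> \<longrightarrow>
        finite {e \<in> edges G. src G e \<in> inf_path_verts G \<alpha> \<and>
                  rng G e \<notin> root G (inf_path_verts G \<alpha>)})"

definition strongly_all_reflexive :: "('v, 'e) dgraph \<Rightarrow> bool" where
  "strongly_all_reflexive G \<longleftrightarrow> all_reflexive G \<and> (\<forall>c. is_cycle G c \<longrightarrow> has_exit G c)"

text \<open>Quotient graph E/(H,S): Inl v is the old vertex v, Inr v is the new vertex v';
  Inl e is the old edge e, Inr e is the new edge e'.\<close>
definition quotient_graph :: "('v, 'e) dgraph \<Rightarrow> 'v set \<Rightarrow> 'v set \<Rightarrow> ('v + 'v, 'e + 'e) dgraph" where
  "quotient_graph G H S =
     \<lparr> verts = Inl ` (verts G - H) \<union> Inr ` (breaking G H - S),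
       edges = Inl ` {e \<in> edges G. rng G e \<notin> H} \<union> Inr ` {e \<in> edges G. rng G e \<in> breaking G H - S},
       src = (\<lambda>x. case x of Inl e \<Rightarrow> Inl (src G e) | Inr e \<Rightarrow> Inl (src G e)),
       rng = (\<lambda>x. case x of Inl e \<Rightarrow> Inl (rng G e) | Inr e \<Rightarrow> Inr (rng G e)) \<rparr>"

text \<open>Porcupine graph P_(H,S): Inl v is the old vertex v, Inr p is w^p;
  Inl e is the old edge e, Inr p is f^p.\<close>
definition porc_F :: "('v, 'e) dgraph \<Rightarrow> 'v set \<Rightarrow> 'v set \<Rightarrow> 'e list set" where
  "porc_F G H S =
     {p. is_path G p \<and> path_rng G p \<in> H \<and> src G (last p) \<notin> H \<union> S} \<union>
     {p. is_path G p \<and> path_rng G p \<in> S}"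

definition porcupine_graph :: "('v, 'e) dgraph \<Rightarrow> 'v set \<Rightarrow> 'v set \<Rightarrow> ('v + 'e list, 'e + 'e list) dgraph" where
  "porcupine_graph G H S =
     \<lparr> verts = Inl ` (H \<union> S) \<union> Inr ` porc_F G H S,
       edges = Inl ` {e \<in> edges G. src G e \<in> H} \<union> Inl ` {e \<in> edges G. src G e \<in> S \<and> rng G e \<in> H}
               \<union> Inr ` porc_F G H S,
       src = (\<lambda>x. case x of Inl e \<Rightarrow> Inl (src G e) | Inr p \<Rightarrow> Inr p),
       rng = (\<lambda>x. case x of Inl e \<Rightarrow> Inl (rng G e)
                 | Inr p \<Rightarrow> (if length p = 1 then Inl (rng G (hd p)) else Inr (tl p))) \<rparr>"

end

theory Submission
  imports Defs
begin


definition stepr :: "('v,'e) dgraph \<Rightarrow> ('v \<times> 'v) set" where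
  "stepr G = {(src G e, rng G e) | e. e \<in> edges G}"

lemma stepr_iff: "(a,b) \<in> stepr G \<longleftrightarrow> (\<exists>e\<in>edges G. src G e = a \<and> rng G e = b)"
  unfolding stepr_def by auto

lemma stepr_edge: "e \<in> edges G \<Longrightarrow> (src G e, rng G e) \<in> stepr G"
  unfolding stepr_def by auto

lemma is_path_Nil[simp]: "\<not> is_path G []" by (simp add: is_path_def)

lemma is_path_Cons: "is_path G (e#p) \<longleftrightarrow> e \<in> edges G \<and> (p = [] \<or> (is_path G p \<and> rng G e = src G (hd p)))"
proof
  assume h: "is_path G (e#p)"
  hence e: "e \<in> edges G" "set p \<subseteq> edges G" unfolding is_path_def by auto
  have c: "\<And>i. Suc i < Suc (length p) \<Longrightarrow> rng G ((e#p) ! i) = src G ((e#p) ! Suc i)"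
    using h unfolding is_path_def by auto
  show "e \<in> edges G \<and> (p = [] \<or> (is_path G p \<and> rng G e = src G (hd p)))"
  proof (cases p)
    case Nil then show ?thesis using e by simp
  next
    case (Cons a q)
    have "rng G e = src G (hd p)" using c[of 0] Cons by simp
    moreover have "is_path G p" unfolding is_path_def
      using e Cons c by (auto, metis Suc_less_eq nth_Cons_Suc)
    ultimately show ?thesis using e by simp
  qed
next
  assume h: "e \<in> edges G \<and> (p = [] \<or> (is_path G p \<and> rng G e = src G (hd p)))"
  show "is_path G (e#p)"
  proof (cases "p = []")
    case True then show ?thesis using h by (simp add: is_path_def)
  next
    case False
    with h have p: "is_path G p" "rng G e = src G (hd p)" by auto
    show ?thesis unfolding is_path_def
    proof (intro conjI allI impI)
      show "set (e#p) \<subseteq> edges G" using h p by (auto simp: is_path_def)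
    next
      fix i assume "Suc i < length (e#p)"
      then show "rng G ((e # p) ! i) = src G ((e # p) ! Suc i)"
        using p False by (cases i) (auto simp: is_path_def hd_conv_nth)
    qed simp
  qed
qed

lemma path_src_Cons[simp]: "path_src G (e#p) = src G e" by (simp add: path_src_def)
lemma path_rng_Cons: "path_rng G (e#p) = (if p = [] then rng G e else path_rng G p)"
  by (simp add: path_rng_def)

lemma is_path_single[simp]: "is_path G [e] \<longleftrightarrow> e \<in> edges G"
  by (simp add: is_path_Cons)

lemma path_append:
  assumes "is_path G p" "is_path G q" "path_rng G p = path_src G q"
  shows "is_path G (p @ q) \<and> path_src G (p @ q) = path_src G p \<and> path_rng G (p @ q) = path_rng G q"
  using assms
proof (induction p)
  case Nil then show ?case by simp
next
  case (Cons e p)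
  show ?case
  proof (cases "p = []")
    case True
    then show ?thesis using Cons.prems
      by (cases q) (auto simp: is_path_Cons path_rng_Cons path_src_def path_rng_def)
  next
    case False
    with Cons.prems have "is_path G p" "rng G e = src G (hd p)" "e \<in> edges G"
      by (auto simp: is_path_Cons)
    moreover have "path_rng G p = path_src G q" using Cons.prems False by (simp add: path_rng_Cons)
    ultimately have "is_path G (p @ q) \<and> path_src G (p @ q) = path_src G p \<and> path_rng G (p @ q) = path_rng G q"
      using Cons.IH Cons.prems by blast
    then show ?thesis using False \<open>rng G e = src G (hd p)\<close> \<open>e \<in> edges G\<close>
      by (auto simp: is_path_Cons path_rng_Cons path_src_def)
  qed
qed

lemma path_trancl: "is_path G p \<Longrightarrow> (path_src G p, path_rng G p) \<in> (stepr G)\<^sup>+"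
proof (induction p)
  case Nil then show ?case by simp
next
  case (Cons e p)
  then show ?case
  proof (cases "p = []")
    case True then show ?thesis using Cons.prems by (auto simp: path_rng_Cons intro: stepr_edge)
  next
    case False
    with Cons.prems have "is_path G p" "rng G e = src G (hd p)" "e \<in> edges G"
      by (auto simp: is_path_Cons)
    then have "(src G e, path_src G p) \<in> stepr G" by (metis path_src_def stepr_edge)
    then show ?thesis using Cons.IH \<open>is_path G p\<close> False
      by (simp add: path_rng_Cons trancl_into_trancl2)
  qed
qed

lemma trancl_path: "(u,v) \<in> (stepr G)\<^sup>+ \<Longrightarrow> \<exists>p. is_path G p \<and> path_src G p = u \<and> path_rng G p = v"
proof (induction rule: converse_trancl_induct)
  case (base y)
  then obtain e where "e \<in> edges G" "src G e = y" "rng G e = v" by (auto simp: stepr_iff)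
  then show ?case by (intro exI[of _ "[e]"]) (simp add: path_rng_Cons)
next
  case (step y z)
  then obtain e where e: "e \<in> edges G" "src G e = y" "rng G e = z" by (auto simp: stepr_iff)
  from step obtain p where p: "is_path G p" "path_src G p = z" "path_rng G p = v" by auto
  then show ?case using e
    by (intro exI[of _ "e#p"]) (auto simp: is_path_Cons path_rng_Cons path_src_def)
qed

lemma trancl_path_iff: "(u,v) \<in> (stepr G)\<^sup>+ \<longleftrightarrow> (\<exists>p. is_path G p \<and> path_src G p = u \<and> path_rng G p = v)"
  using path_trancl trancl_path by metis

lemma geq_iff: "geq G u v \<longleftrightarrow> (u = v \<and> u \<in> verts G) \<or> (u,v) \<in> (stepr G)\<^sup>+"
  unfolding geq_def trancl_path_iff by simp

lemma path_edges_reach: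
  assumes "is_path G p" "e \<in> set p"
  shows "(path_src G p, src G e) \<in> (stepr G)\<^sup>* \<and> (rng G e, path_rng G p) \<in> (stepr G)\<^sup>*"
  using assms
proof (induction p)
  case Nil then show ?case by simp
next
  case (Cons a p)
  show ?case
  proof (cases "p = []")
    case True then show ?thesis using Cons.prems by (simp add: path_rng_Cons)
  next
    case False
    with Cons.prems have p: "is_path G p" "rng G a = src G (hd p)" "a \<in> edges G"
      by (auto simp: is_path_Cons)
    have r: "(path_src G p, path_rng G p) \<in> (stepr G)\<^sup>*" using path_trancl[OF p(1)] by simp
    have s: "(src G a, path_src G p) \<in> stepr G" using p by (metis path_src_def stepr_edge)
    show ?thesis
    proof (cases "e = a")
      case True then show ?thesis using r p False by (simp add: path_rng_Cons path_src_def)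
    next
      case False
      then have "e \<in> set p" using Cons.prems by simp
      then have "(path_src G p, src G e) \<in> (stepr G)\<^sup>* \<and> (rng G e, path_rng G p) \<in> (stepr G)\<^sup>*"
        using Cons.IH p by blast
      then show ?thesis using s \<open>p \<noteq> []\<close> by (auto simp: path_rng_Cons intro: converse_rtrancl_into_rtrancl)
    qed
  qed
qed

lemma path_drop:
  assumes "is_path G p" "k < length p"
  shows "is_path G (drop k p) \<and> path_src G (drop k p) = src G (p ! k) \<and> path_rng G (drop k p) = path_rng G p"
  using assms unfolding is_path_def path_src_def path_rng_def
  by (auto simp: hd_drop_conv_nth dest: in_set_dropD)

lemma path_take:
  assumes "is_path G p" "0 < k" "k \<le> length p"
  shows "is_path G (take k p) \<and> path_src G (take k p) = path_src G p \<and> path_rng G (take k p) = rng G (p ! (k - 1))"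
  using assms unfolding is_path_def path_src_def path_rng_def
  by (auto simp: last_conv_nth dest: in_set_takeD)

lemma closed_path_cycle:
  assumes "is_path G p" "path_src G p = path_rng G p"
  shows "\<exists>c. is_cycle G c \<and> set c \<subseteq> set p"
  using assms
proof (induction "length p" arbitrary: p rule: less_induct)
  case less
  show ?case
  proof (cases "distinct (map (src G) p)")
    case True then show ?thesis using less.prems by (auto simp: is_cycle_def)
  next
    case False
    then obtain i j where ij: "i < j" "j < length p" "src G (p ! i) = src G (p ! j)"
      unfolding distinct_conv_nth by (auto, metis linorder_neq_iff)
    define q where "q = take (j - i) (drop i p)"
    have d: "is_path G (drop i p)" "path_src G (drop i p) = src G (p ! i)"
      using path_drop[OF less.prems(1), of i] ij by auto
    have q: "is_path G q" "path_src G q = src G (p ! i)" "path_rng G q = rng G (drop i p ! (j - i - 1))"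
      using path_take[OF d(1), of "j - i"] ij d(2) unfolding q_def by auto
    have "drop i p ! (j - i - 1) = p ! (j - 1)" using ij by simp
    moreover have "rng G (p ! (j - 1)) = src G (p ! j)"
      using less.prems(1) ij unfolding is_path_def
      by (metis One_nat_def Suc_pred gr_implies_not_zero not_gr_zero)
    ultimately have "path_src G q = path_rng G q" using q ij by simp
    moreover have "length q < length p" using ij unfolding q_def by simp
    ultimately obtain c where "is_cycle G c" "set c \<subseteq> set q" using less.hyps q(1) by blast
    moreover have "set q \<subseteq> set p" unfolding q_def by (meson in_set_dropD in_set_takeD subsetI)
    ultimately show ?thesis by blast
  qed
qed



lemma cycle_path: "is_cycle G c \<Longrightarrow> is_path G c" by (simp add: is_cycle_def)

lemma cycle_verts_iff: "v \<in> cycle_verts G c \<longleftrightarrow> (\<exists>e\<in>set c. src G e = v)"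
  by (auto simp: cycle_verts_def)

lemma cycle_rng_in:
  assumes "is_cycle G c" "e \<in> set c"
  shows "rng G e \<in> cycle_verts G c"
proof -
  obtain i where i: "i < length c" "e = c ! i" using assms(2) by (auto simp: in_set_conv_nth)
  show ?thesis
  proof (cases "Suc i < length c")
    case True
    then have "rng G e = src G (c ! Suc i)" using assms(1) i unfolding is_cycle_def is_path_def by auto
    then show ?thesis using True by (auto simp: cycle_verts_def)
  next
    case False
    have "c \<noteq> []" "i = length c - 1" using i False by auto
    then have "e = last c" using i by (simp add: last_conv_nth)
    then have "rng G e = src G (hd c)" using assms(1) unfolding is_cycle_def path_src_def path_rng_def by simp
    moreover have "c \<noteq> []" using i by auto
    ultimately show ?thesis by (auto simp: cycle_verts_def)
  qed
qed

lemma cycle_reach: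
  assumes "is_cycle G c" "u \<in> cycle_verts G c" "v \<in> cycle_verts G c"
  shows "(u, v) \<in> (stepr G)\<^sup>*"
proof -
  have p: "is_path G c" "path_src G c = path_rng G c" using assms(1) by (auto simp: is_cycle_def)
  obtain e where e: "e \<in> set c" "src G e = u" using assms(2) by (auto simp: cycle_verts_def)
  obtain f where f: "f \<in> set c" "src G f = v" using assms(3) by (auto simp: cycle_verts_def)
  have "(u, rng G e) \<in> stepr G" using e p(1) unfolding is_path_def by (auto intro: stepr_edge)
  moreover have "(rng G e, path_rng G c) \<in> (stepr G)\<^sup>*" using path_edges_reach[OF p(1) e(1)] by simp
  moreover have "(path_src G c, v) \<in> (stepr G)\<^sup>*" using path_edges_reach[OF p(1) f(1)] f by simp
  ultimately show ?thesis using p(2) by (metis converse_rtrancl_into_rtrancl rtrancl_trans)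
qed

lemma cycle_reach_plus:
  assumes "is_cycle G c" "u \<in> cycle_verts G c"
  shows "(u, u) \<in> (stepr G)\<^sup>+"
proof -
  have p: "is_path G c" using assms(1) by (auto simp: is_cycle_def)
  obtain e where e: "e \<in> set c" "src G e = u" using assms(2) by (auto simp: cycle_verts_def)
  have "(u, rng G e) \<in> stepr G" using e p(1) unfolding is_path_def by (auto intro: stepr_edge)
  moreover have "(rng G e, u) \<in> (stepr G)\<^sup>*" using cycle_reach[OF assms(1) cycle_rng_in[OF assms(1) e(1)] assms(2)] .
  ultimately show ?thesis by (meson rtrancl_into_trancl2)
qed

lemma cycle_nonempty: "is_cycle G c \<Longrightarrow> cycle_verts G c \<noteq> {}"
  by (auto simp: is_cycle_def cycle_verts_def is_path_def)

lemma closed_reach_cycle: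
  assumes "(x, x) \<in> (stepr G)\<^sup>+"
  shows "\<exists>c. is_cycle G c \<and> (\<forall>y \<in> cycle_verts G c. (x, y) \<in> (stepr G)\<^sup>* \<and> (y, x) \<in> (stepr G)\<^sup>*)"
proof -
  obtain p where p: "is_path G p" "path_src G p = x" "path_rng G p = x" using trancl_path[OF assms] by auto
  obtain c where c: "is_cycle G c" "set c \<subseteq> set p" using closed_path_cycle[OF p(1)] p by auto
  have "(x, y) \<in> (stepr G)\<^sup>* \<and> (y, x) \<in> (stepr G)\<^sup>*" if yc: "y \<in> cycle_verts G c" for y
  proof -
    obtain e where e: "e \<in> set c" "src G e = y" using yc unfolding cycle_verts_def by blast
    then have ep: "e \<in> set p" using c by auto
    have "e \<in> edges G" using p(1) ep unfolding is_path_def by auto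
    then have "(y, rng G e) \<in> stepr G" using e by (auto intro: stepr_edge)
    then show ?thesis using path_edges_reach[OF p(1) ep] p e by (metis converse_rtrancl_into_rtrancl)
  qed
  then show ?thesis using c by blast
qed

lemma inf_path_reach:
  assumes "is_inf_path G \<beta>" "i \<le> j"
  shows "(src G (\<beta> i), src G (\<beta> j)) \<in> (stepr G)\<^sup>*"
  using assms(2)
proof (induction j)
  case 0 then show ?case by simp
next
  case (Suc j)
  show ?case
  proof (cases "i = Suc j")
    case True then show ?thesis by simp
  next
    case False
    then have "(src G (\<beta> i), src G (\<beta> j)) \<in> (stepr G)\<^sup>*" using Suc by simp
    moreover have "(src G (\<beta> j), src G (\<beta> (Suc j))) \<in> stepr G"
      using assms(1) unfolding is_inf_path_def by (metis stepr_edge)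
    ultimately show ?thesis by simp
  qed
qed

lemma inf_path_reach_plus:
  assumes "is_inf_path G \<beta>" "i < j"
  shows "(src G (\<beta> i), src G (\<beta> j)) \<in> (stepr G)\<^sup>+"
proof -
  obtain k where k: "j = Suc k" "i \<le> k" using assms(2) by (cases j) auto
  have "(src G (\<beta> i), src G (\<beta> k)) \<in> (stepr G)\<^sup>*" using inf_path_reach[OF assms(1) k(2)] .
  moreover have "(src G (\<beta> k), src G (\<beta> (Suc k))) \<in> stepr G"
    using assms(1) unfolding is_inf_path_def by (metis stepr_edge)
  ultimately show ?thesis using k by simp
qed

lemma hereditary_rtrancl:
  assumes "hereditary G H" "(a, b) \<in> (stepr G)\<^sup>*" "a \<in> H"
  shows "b \<in> H"
proof (cases "a = b")
  case True then show ?thesis using assms by simp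
next
  case False
  then have "(a,b) \<in> (stepr G)\<^sup>+" using assms(2) by (simp add: rtrancl_eq_or_trancl)
  then obtain p where "is_path G p" "path_src G p = a" "path_rng G p = b" using trancl_path by metis
  then show ?thesis using assms unfolding hereditary_def by auto
qed

lemma reach_exit:
  assumes "(a, b) \<in> (stepr G)\<^sup>*" "a \<in> A" "b \<notin> A"
  shows "\<exists>e \<in> edges G. src G e \<in> A \<and> rng G e \<notin> A \<and> (a, src G e) \<in> (stepr G)\<^sup>* \<and> (rng G e, b) \<in> (stepr G)\<^sup>*"
  using assms
proof (induction rule: converse_rtrancl_induct)
  case base then show ?case by simp
next
  case (step y z)
  obtain e where e: "e \<in> edges G" "src G e = y" "rng G e = z" using step(1) by (auto simp: stepr_iff)
  show ?case
  proof (cases "z \<in> A")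
    case True
    then obtain f where "f \<in> edges G" "src G f \<in> A" "rng G f \<notin> A" "(z, src G f) \<in> (stepr G)\<^sup>*" "(rng G f, b) \<in> (stepr G)\<^sup>*"
      using step by blast
    then show ?thesis using step(1) by (meson converse_rtrancl_into_rtrancl)
  next
    case False
    then show ?thesis using e step by auto
  qed
qed

lemma closed_under_trancl:
  assumes "(x, y) \<in> r\<^sup>+" "\<And>z. (x, z) \<in> r \<Longrightarrow> z \<in> A" "\<And>u w. u \<in> A \<Longrightarrow> (u, w) \<in> r \<Longrightarrow> w \<in> A"
  shows "y \<in> A"
  using assms(1)
  by (induction rule: trancl_induct) (use assms in auto)

lemma root_iff:
  assumes "u \<in> verts G"
  shows "u \<in> root G V \<longleftrightarrow> (\<exists>v\<in>V. (u, v) \<in> (stepr G)\<^sup>*)"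
  using assms unfolding root_def geq_iff by (auto simp: rtrancl_eq_or_trancl)

lemma wf_src: "wf_dgraph G \<Longrightarrow> e \<in> edges G \<Longrightarrow> src G e \<in> verts G"
  by (simp add: wf_dgraph_def)
lemma wf_rng: "wf_dgraph G \<Longrightarrow> e \<in> edges G \<Longrightarrow> rng G e \<in> verts G"
  by (simp add: wf_dgraph_def)

lemma wf_reach_verts:
  assumes "wf_dgraph G" "(u,v) \<in> (stepr G)\<^sup>+"
  shows "u \<in> verts G \<and> v \<in> verts G"
  using assms(2)
  by (induction rule: trancl_induct) (use assms(1) in \<open>auto simp: stepr_iff wf_dgraph_def\<close>)

lemma wf_geq:
  assumes "wf_dgraph G"
  shows "geq G u v \<longleftrightarrow> u \<in> verts G \<and> (u, v) \<in> (stepr G)\<^sup>*"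
  using wf_reach_verts[OF assms] unfolding geq_iff by (auto simp: rtrancl_eq_or_trancl)



locale sett =
  fixes E :: "('v,'e) dgraph" and H :: "'v set"
  assumes wf: "wf_dgraph E" and her: "hereditary E H" and B0: "breaking E H = {}"
begin

abbreviation "Q \<equiv> quotient_graph E H {}"

lemma H_verts: "H \<subseteq> verts E" using her by (simp add: hereditary_def)

lemma her_edge: "e \<in> edges E \<Longrightarrow> src E e \<in> H \<Longrightarrow> rng E e \<in> H"
  using hereditary_rtrancl[OF her, of "src E e" "rng E e"] stepr_edge[of e E] by auto

lemma her_reach: "(a, b) \<in> (stepr E)\<^sup>* \<Longrightarrow> a \<in> H \<Longrightarrow> b \<in> H"
  using hereditary_rtrancl[OF her] by blast

lemma Q_verts: "verts Q = Inl ` (verts E - H)"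
  by (simp add: quotient_graph_def B0)
lemma Q_edges: "edges Q = Inl ` {e \<in> edges E. rng E e \<notin> H}"
  by (simp add: quotient_graph_def B0)
lemma Q_src[simp]: "src Q (Inl e) = Inl (src E e)"
  by (simp add: quotient_graph_def)
lemma Q_rng[simp]: "rng Q (Inl e) = Inl (rng E e)"
  by (simp add: quotient_graph_def)

lemma Q_edge_Inl: "x \<in> edges Q \<Longrightarrow> \<exists>e. x = Inl e \<and> e \<in> edges E \<and> rng E e \<notin> H \<and> src E e \<notin> H"
  using her_edge by (auto simp: Q_edges)

lemma Q_Inl_edge[simp]: "Inl e \<in> edges Q \<longleftrightarrow> e \<in> edges E \<and> rng E e \<notin> H"
  by (auto simp: Q_edges)

lemma Q_path_map: "is_path Q (map Inl p) \<longleftrightarrow> is_path E p \<and> (\<forall>e\<in>set p. rng E e \<notin> H)"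
  unfolding is_path_def by auto

lemma Q_path_src[simp]: "p \<noteq> [] \<Longrightarrow> path_src Q (map Inl p) = Inl (path_src E p)"
  by (simp add: path_src_def hd_map)
lemma Q_path_rng[simp]: "p \<noteq> [] \<Longrightarrow> path_rng Q (map Inl p) = Inl (path_rng E p)"
  by (simp add: path_rng_def last_map)

lemma Q_all_Inl: "set p \<subseteq> edges Q \<Longrightarrow> p = map Inl (map projl p)"
  by (induction p) (auto simp: Q_edges)

lemma Q_path: "is_path Q p \<Longrightarrow> \<exists>p'. p = map Inl p' \<and> is_path E p' \<and> (\<forall>e\<in>set p'. rng E e \<notin> H)"
  using Q_all_Inl[of p] Q_path_map by (metis is_path_def)

lemma Q_verts_Inl[simp]: "Inl a \<in> verts Q \<longleftrightarrow> a \<in> verts E \<and> a \<notin> H"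
  by (auto simp: Q_verts)

lemma Q_geq_E: "geq Q (Inl a) (Inl b) \<Longrightarrow> geq E a b"
proof -
  assume "geq Q (Inl a) (Inl b)"
  then consider "a = b" "a \<in> verts E" | p where "is_path Q p" "path_src Q p = Inl a" "path_rng Q p = Inl b"
    unfolding geq_def by auto
  then show "geq E a b"
  proof cases
    case 1 then show ?thesis by (simp add: geq_def)
  next
    case 2
    then obtain p' where "p = map Inl p'" "is_path E p'" using Q_path by blast
    then show ?thesis using 2 unfolding geq_def by (metis Q_path_rng Q_path_src is_path_Nil sum.inject(1))
  qed
qed

lemma E_geq_Q: assumes "geq E a b" "b \<notin> H" shows "geq Q (Inl a) (Inl b)"
proof -
  from assms(1) consider "a = b" "a \<in> verts E" | p where "is_path E p" "path_src E p = a" "path_rng E p = b"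
    unfolding geq_def by auto
  then show ?thesis
  proof cases
    case 1 then show ?thesis using assms by (simp add: geq_def)
  next
    case 2
    have "\<forall>e\<in>set p. rng E e \<notin> H" using path_edges_reach[OF 2(1)] 2 assms(2) her_reach by blast
    then have "is_path Q (map Inl p)" using Q_path_map 2 by blast
    then show ?thesis unfolding geq_def using 2 by (metis Q_path_rng Q_path_src is_path_Nil)
  qed
qed

lemma Q_cycle_map: "is_cycle Q (map Inl c) \<longleftrightarrow> is_cycle E c \<and> (\<forall>e\<in>set c. rng E e \<notin> H)"
  unfolding is_cycle_def using Q_path_map[of c]
  by (cases "c = []") (auto simp: distinct_map inj_on_def comp_def)

lemma Q_cycle: "is_cycle Q c \<Longrightarrow> \<exists>c'. c = map Inl c' \<and> is_cycle E c' \<and> (\<forall>e\<in>set c'. rng E e \<notin> H)"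
  using Q_all_Inl[of c] Q_cycle_map by (metis is_cycle_def is_path_def)

lemma Q_cycle_verts[simp]: "cycle_verts Q (map Inl c) = Inl ` cycle_verts E c"
  unfolding cycle_verts_def by (auto simp: image_image)

lemma Q_exit: "is_exit Q (map Inl c) x \<longleftrightarrow> (\<exists>e. x = Inl e \<and> is_exit E c e \<and> rng E e \<notin> H)"
proof
  assume "is_exit Q (map Inl c) x"
  then show "\<exists>e. x = Inl e \<and> is_exit E c e \<and> rng E e \<notin> H"
    unfolding is_exit_def using Q_edge_Inl by fastforce
next
  assume "\<exists>e. x = Inl e \<and> is_exit E c e \<and> rng E e \<notin> H"
  then show "is_exit Q (map Inl c) x" unfolding is_exit_def by auto
qed

lemma Q_out_edges: "out_edges Q (Inl v) = Inl ` {e \<in> out_edges E v. rng E e \<notin> H}"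
  by (auto simp: out_edges_def Q_edges)

lemma Q_inf_path_map: "is_inf_path Q (Inl \<circ> \<beta>) \<longleftrightarrow> is_inf_path E \<beta> \<and> (\<forall>i. rng E (\<beta> i) \<notin> H)"
  unfolding is_inf_path_def by auto

lemma Q_inf_path: "is_inf_path Q \<alpha> \<Longrightarrow> \<exists>\<beta>. \<alpha> = Inl \<circ> \<beta> \<and> is_inf_path E \<beta> \<and> (\<forall>i. rng E (\<beta> i) \<notin> H)"
proof -
  assume a: "is_inf_path Q \<alpha>"
  then have "\<forall>i. \<alpha> i \<in> edges Q" by (simp add: is_inf_path_def)
  then have "\<alpha> i = Inl (projl (\<alpha> i))" for i
  proof -
    obtain e where "\<alpha> i = Inl e" using Q_edge_Inl \<open>\<forall>i. \<alpha> i \<in> edges Q\<close> by blast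
    then show ?thesis by simp
  qed
  then have "\<alpha> = Inl \<circ> (projl \<circ> \<alpha>)" by auto
  then show ?thesis using a Q_inf_path_map by metis
qed

lemma Q_ipv[simp]: "inf_path_verts Q (Inl \<circ> \<beta>) = Inl ` inf_path_verts E \<beta>"
  by (auto simp: inf_path_verts_def)

end


context sett
begin

abbreviation "P \<equiv> porcupine_graph E H {}"
abbreviation "F \<equiv> porc_F E H {}"

lemma P_verts: "verts P = Inl ` H \<union> Inr ` F"
  by (simp add: porcupine_graph_def)
lemma P_edges: "edges P = Inl ` {e \<in> edges E. src E e \<in> H} \<union> Inr ` F"
  by (simp add: porcupine_graph_def)
lemma P_src_Inl[simp]: "src P (Inl e) = Inl (src E e)"
  by (simp add: porcupine_graph_def)
lemma P_rng_Inl[simp]: "rng P (Inl e) = Inl (rng E e)"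
  by (simp add: porcupine_graph_def)
lemma P_src_Inr[simp]: "src P (Inr p) = Inr p"
  by (simp add: porcupine_graph_def)
lemma P_rng_Inr: "rng P (Inr p) = (if length p = 1 then Inl (rng E (hd p)) else Inr (tl p))"
  by (simp add: porcupine_graph_def)

lemma F_nonempty: "p \<in> F \<Longrightarrow> p \<noteq> []"
  by (auto simp: porc_F_def)

lemma P_Inl_edge[simp]: "Inl e \<in> edges P \<longleftrightarrow> e \<in> edges E \<and> src E e \<in> H"
  by (auto simp: P_edges)
lemma P_Inl_vert[simp]: "Inl a \<in> verts P \<longleftrightarrow> a \<in> H"
  by (auto simp: P_verts)

lemma P_path_map: "is_path P (map Inl p) \<longleftrightarrow> is_path E p \<and> (\<forall>e\<in>set p. src E e \<in> H)"
proof -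
  have a: "set (map Inl p) \<subseteq> edges P \<longleftrightarrow> set p \<subseteq> edges E \<and> (\<forall>e\<in>set p. src E e \<in> H)"
    by (induction p) auto
  show ?thesis unfolding is_path_def a by (simp add: conj_ac)
qed

lemma P_path_map': assumes "is_path E p" "path_src E p \<in> H" shows "is_path P (map Inl p)"
proof -
  have "\<forall>e\<in>set p. src E e \<in> H"
  proof
    fix e assume "e \<in> set p"
    then have "(path_src E p, src E e) \<in> (stepr E)\<^sup>*" using path_edges_reach[OF assms(1)] by blast
    then show "src E e \<in> H" using her_reach assms(2) by blast
  qed
  then show ?thesis using P_path_map assms(1) by blast
qed

lemma P_path_src[simp]: "p \<noteq> [] \<Longrightarrow> path_src P (map Inl p) = Inl (path_src E p)"
  by (simp add: path_src_def hd_map)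
lemma P_path_rng[simp]: "p \<noteq> [] \<Longrightarrow> path_rng P (map Inl p) = Inl (path_rng E p)"
  by (simp add: path_rng_def last_map)

lemma P_path_Inl_all: "is_path P p \<Longrightarrow> src P (hd p) = Inl a \<Longrightarrow> \<forall>x\<in>set p. \<exists>e. x = Inl e"
proof (induction p arbitrary: a)
  case Nil then show ?case by simp
next
  case (Cons x p)
  have x: "x \<in> edges P" using Cons.prems by (simp add: is_path_Cons)
  then obtain e where e: "x = Inl e" using Cons.prems(2) by (cases x) auto
  show ?case
  proof (cases "p = []")
    case True then show ?thesis using e by auto
  next
    case False
    then have "is_path P p" "rng P x = src P (hd p)" using Cons.prems by (auto simp: is_path_Cons)
    then have "\<forall>x\<in>set p. \<exists>e. x = Inl e" using Cons.IH e by (metis P_rng_Inl)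
    then show ?thesis using e by auto
  qed
qed

lemma P_path_Inl: "is_path P p \<Longrightarrow> src P (hd p) = Inl a \<Longrightarrow>
    \<exists>p'. p = map Inl p' \<and> is_path E p' \<and> (\<forall>e\<in>set p'. src E e \<in> H)"
proof -
  assume a: "is_path P p" "src P (hd p) = Inl a"
  then have "\<forall>x\<in>set p. \<exists>e. x = Inl e" by (rule P_path_Inl_all)
  then have "p = map Inl (map projl p)" by (induction p) auto
  then show ?thesis using a(1) P_path_map by metis
qed

lemma P_geq_E: "geq P (Inl a) (Inl b) \<Longrightarrow> geq E a b"
proof -
  assume "geq P (Inl a) (Inl b)"
  then consider "a = b" "a \<in> H" | p where "is_path P p" "path_src P p = Inl a" "path_rng P p = Inl b"
    unfolding geq_def by auto
  then show "geq E a b"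
  proof cases
    case 1 then show ?thesis using H_verts by (auto simp: geq_def)
  next
    case 2
    then obtain p' where "p = map Inl p'" "is_path E p'" using P_path_Inl by (metis path_src_def)
    then show ?thesis using 2 unfolding geq_def by (metis P_path_rng P_path_src is_path_Nil sum.inject(1))
  qed
qed

lemma E_geq_P: assumes "geq E a b" "a \<in> H" shows "geq P (Inl a) (Inl b)"
proof -
  from assms(1) consider "a = b" "a \<in> verts E" | p where "is_path E p" "path_src E p = a" "path_rng E p = b"
    unfolding geq_def by auto
  then show ?thesis
  proof cases
    case 1 then show ?thesis using assms by (simp add: geq_def)
  next
    case 2
    then have "is_path P (map Inl p)" using P_path_map' assms(2) by blast
    then show ?thesis unfolding geq_def using 2 by (metis P_path_rng P_path_src is_path_Nil)
  qed
qed

fun rk :: "'v + 'e list \<Rightarrow> nat" where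
  "rk (Inl _) = 0" | "rk (Inr p) = length p"

lemma P_step_rk:
  assumes "(x, y) \<in> stepr P"
  shows "rk y \<le> rk x \<and> (\<not> isl x \<longrightarrow> rk y < rk x)"
proof -
  obtain z where z: "z \<in> edges P" "src P z = x" "rng P z = y" using assms by (auto simp: stepr_iff)
  show ?thesis
  proof (cases z)
    case (Inl e) then show ?thesis using z by auto
  next
    case (Inr p)
    then have "p \<noteq> []" using z(1) F_nonempty by (auto simp: P_edges)
    then show ?thesis using z Inr by (auto simp: P_rng_Inr)
  qed
qed

lemma P_trancl_rk:
  assumes "(x, y) \<in> (stepr P)\<^sup>+"
  shows "rk y \<le> rk x \<and> (\<not> isl x \<longrightarrow> rk y < rk x)"
  using assms
proof (induction rule: trancl_induct)
  case (base y) then show ?case by (rule P_step_rk)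
next
  case (step y z)
  then show ?case using P_step_rk[OF step(2)] by auto
qed

lemma P_no_closed_Inr: "(x, x) \<in> (stepr P)\<^sup>+ \<Longrightarrow> isl x"
  using P_trancl_rk by fastforce

lemma P_cycle: "is_cycle P c \<Longrightarrow> \<exists>c'. c = map Inl c' \<and> is_cycle E c' \<and> (\<forall>e\<in>set c'. src E e \<in> H)"
proof -
  assume c: "is_cycle P c"
  then have p: "is_path P c" by (simp add: is_cycle_def)
  then have "c \<noteq> []" by (auto simp: is_path_def)
  then have "src P (hd c) \<in> cycle_verts P c" by (simp add: cycle_verts_def)
  then have "isl (src P (hd c))" using cycle_reach_plus[OF c] P_no_closed_Inr by blast
  then obtain a where "src P (hd c) = Inl a" by (metis isl_def)
  then obtain c' where c': "c = map Inl c'" "is_path E c'" "\<forall>e\<in>set c'. src E e \<in> H"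
    using P_path_Inl p by blast
  have "c' \<noteq> []" using c' \<open>c \<noteq> []\<close> by auto
  then have "is_cycle E c'" using c c' unfolding is_cycle_def
    by (auto simp: distinct_map inj_on_def comp_def)
  then show ?thesis using c' by blast
qed

lemma P_cycle_map: "is_cycle E c \<Longrightarrow> (\<forall>e\<in>set c. src E e \<in> H) \<Longrightarrow> is_cycle P (map Inl c)"
  unfolding is_cycle_def using P_path_map[of c]
  by (cases "c = []") (auto simp: distinct_map inj_on_def comp_def)

lemma P_cycle_verts[simp]: "cycle_verts P (map Inl c) = Inl ` cycle_verts E c"
  unfolding cycle_verts_def by (auto simp: image_image)

lemma P_exit: "is_exit P (map Inl c) x \<longleftrightarrow> (\<exists>e. x = Inl e \<and> is_exit E c e \<and> src E e \<in> H)"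
proof
  assume a: "is_exit P (map Inl c) x"
  then have "src P x \<in> Inl ` cycle_verts E c" "x \<in> edges P" by (auto simp: is_exit_def)
  then obtain e where "x = Inl e" by (cases x) auto
  then show "\<exists>e. x = Inl e \<and> is_exit E c e \<and> src E e \<in> H"
    using a unfolding is_exit_def by auto
next
  assume "\<exists>e. x = Inl e \<and> is_exit E c e \<and> src E e \<in> H"
  then show "is_exit P (map Inl c) x" unfolding is_exit_def by auto
qed

lemma P_out_edges: "v \<in> H \<Longrightarrow> out_edges P (Inl v) = Inl ` out_edges E v"
  by (auto simp: out_edges_def P_edges)

lemma P_out_edges_Inr: "out_edges P (Inr p) \<subseteq> {Inr p}"
  by (auto simp: out_edges_def P_edges)

lemma P_ipv[simp]: "inf_path_verts P (Inl \<circ> \<beta>) = Inl ` inf_path_verts E \<beta>"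
  by (auto simp: inf_path_verts_def)

lemma P_inf_path_map: "is_inf_path P (Inl \<circ> \<beta>) \<longleftrightarrow> is_inf_path E \<beta> \<and> (\<forall>i. src E (\<beta> i) \<in> H)"
  unfolding is_inf_path_def by (simp add: all_conj_distrib conj_ac)

lemma P_inf_path_eventually:
  assumes a: "is_inf_path P \<alpha>"
  shows "\<exists>N. (\<forall>i<N. \<not> isl (\<alpha> i)) \<and> (\<forall>i\<ge>N. isl (\<alpha> i))"
proof -
  have stp: "(src P (\<alpha> i), src P (\<alpha> (Suc i))) \<in> stepr P" for i
    using a unfolding is_inf_path_def by (metis stepr_edge)
  have srcisl: "isl (src P x) \<longleftrightarrow> isl x" for x by (cases x) auto
  have ex: "\<exists>N. isl (\<alpha> N)"
  proof (rule ccontr)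
    assume "\<not> ?thesis"
    then have dec: "rk (src P (\<alpha> (Suc i))) < rk (src P (\<alpha> i))" for i
      using P_step_rk[OF stp[of i]] srcisl by blast
    have "rk (src P (\<alpha> i)) + i \<le> rk (src P (\<alpha> 0))" for i
    proof (induction i)
      case 0 then show ?case by simp
    next
      case (Suc i) then show ?case using dec[of i] by linarith
    qed
    from this[of "Suc (rk (src P (\<alpha> 0)))"] show False by simp
  qed
  define N where "N = (LEAST N. isl (\<alpha> N))"
  have N: "isl (\<alpha> N)" using ex N_def by (metis LeastI)
  have "\<forall>i<N. \<not> isl (\<alpha> i)" using N_def not_less_Least by blast
  moreover have "isl (\<alpha> i)" if "i \<ge> N" for i
    using that
  proof (induction i rule: dec_induct)
    case base then show ?case using N .
  next
    case (step k)
    have "rk (src P (\<alpha> (Suc k))) \<le> rk (src P (\<alpha> k))" using P_step_rk[OF stp[of k]] by simp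
    obtain e where "\<alpha> k = Inl e" using step.IH by (metis isl_def)
    then have "isl (src P (\<alpha> (Suc k)))" using a unfolding is_inf_path_def by (metis P_rng_Inl isl_def)
    then show ?case using srcisl by simp
  qed
  ultimately show ?thesis by blast
qed

end


definition bad :: "('v,'e) dgraph \<Rightarrow> (nat \<Rightarrow> 'e) \<Rightarrow> 'e set" where
  "bad G \<alpha> = {e \<in> edges G. src G e \<in> inf_path_verts G \<alpha> \<and> rng G e \<notin> root G (inf_path_verts G \<alpha>)}"

lemma all_reflexive_iff: "all_reflexive G \<longleftrightarrow>
     (\<forall>c. is_cycle G c \<longrightarrow> has_exit G c \<longrightarrow> extreme_cycle G c) \<and>
     (\<forall>v \<in> verts G. inf_emitter G v \<longrightarrow> (\<exists>c. is_cycle G c \<and> v \<in> cycle_verts G c)) \<and>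
     (\<forall>\<alpha>. is_inf_path G \<alpha> \<longrightarrow> finite (bad G \<alpha>))"
  unfolding all_reflexive_def bad_def by blast

lemma extreme_iff: "extreme_cycle G c \<longleftrightarrow> has_exit G c \<and>
     (\<forall>p. is_path G p \<longrightarrow> path_src G p \<in> cycle_verts G c \<longrightarrow>
        (\<exists>w \<in> cycle_verts G c. geq G (path_rng G p) w))"
  unfolding extreme_cycle_def by blast

lemma ar_a: "all_reflexive G \<Longrightarrow> is_cycle G c \<Longrightarrow> has_exit G c \<Longrightarrow> extreme_cycle G c"
  unfolding all_reflexive_def by blast
lemma ar_b: "all_reflexive G \<Longrightarrow> v \<in> verts G \<Longrightarrow> inf_emitter G v \<Longrightarrow> \<exists>c. is_cycle G c \<and> v \<in> cycle_verts G c"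
  unfolding all_reflexive_def by blast
lemma ar_c: "all_reflexive G \<Longrightarrow> is_inf_path G \<alpha> \<Longrightarrow> finite (bad G \<alpha>)"
  unfolding all_reflexive_iff by blast

lemma exit_has: "is_exit G c e \<Longrightarrow> has_exit G c" by (auto simp: has_exit_def)

lemma breaking_empty:
  assumes wf: "wf_dgraph E" and her: "hereditary E H" and ar: "all_reflexive E"
  shows "breaking E H = {}"
proof (rule ccontr)
  assume "breaking E H \<noteq> {}"
  then obtain v where v: "v \<in> verts E" "v \<notin> H" "inf_emitter E v"
    "finite {e \<in> out_edges E v. rng E e \<in> verts E - H}" by (auto simp: breaking_def)
  have "infinite (out_edges E v - {e \<in> out_edges E v. rng E e \<in> verts E - H})"
    using v(3,4) Diff_infinite_finite unfolding inf_emitter_def by blast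
  then obtain e where "e \<in> out_edges E v - {e \<in> out_edges E v. rng E e \<in> verts E - H}"
    by (metis finite.emptyI ex_in_conv)
  then have e: "e \<in> out_edges E v" "rng E e \<notin> verts E - H" by auto
  have ee: "e \<in> edges E" "src E e = v" using e by (auto simp: out_edges_def)
  then have eH: "rng E e \<in> H" using e wf by (auto simp: wf_dgraph_def)
  obtain c where c: "is_cycle E c" "v \<in> cycle_verts E c" using ar_b[OF ar v(1) v(3)] by blast
  show False
  proof (cases "e \<in> set c")
    case True
    then have "rng E e \<in> cycle_verts E c" using cycle_rng_in c by metis
    then have "(rng E e, v) \<in> (stepr E)\<^sup>*" using cycle_reach c by metis
    then show False using hereditary_rtrancl[OF her] eH v by blast
  next
    case False
    then have "is_exit E c e" using ee c by (auto simp: is_exit_def)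
    then have "extreme_cycle E c" using ar_a[OF ar c(1) exit_has] by blast
    moreover have "is_path E [e]" "path_src E [e] = v" "path_rng E [e] = rng E e" using ee by (auto simp: path_rng_def)
    ultimately have "\<exists>w \<in> cycle_verts E c. geq E (path_rng E [e]) w"
      using c(2) unfolding extreme_iff by (metis path_src_Cons)
    then obtain w where w: "w \<in> cycle_verts E c" "geq E (rng E e) w"
      by (auto simp: path_rng_def)
    then have "(rng E e, w) \<in> (stepr E)\<^sup>*" using wf_geq[OF wf] by blast
    then have "w \<in> H" using hereditary_rtrancl[OF her] eH by blast
    moreover have "(w, v) \<in> (stepr E)\<^sup>*" using cycle_reach c w by metis
    ultimately show False using hereditary_rtrancl[OF her] v by blast
  qed
qed

context sett
begin

lemma cycle_src_notH: "is_cycle E c \<Longrightarrow> \<forall>e\<in>set c. rng E e \<notin> H \<Longrightarrow> w \<in> cycle_verts E c \<Longrightarrow> w \<notin> H"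
  using her_edge by (auto simp: cycle_verts_def is_cycle_def is_path_def)

lemma EQ:
  assumes ar: "all_reflexive E"
  shows "all_reflexive Q"
  unfolding all_reflexive_iff
proof (intro conjI allI impI ballI)
  fix c assume c: "is_cycle Q c" "has_exit Q c"
  obtain c' where c': "c = map Inl c'" "is_cycle E c'" "\<forall>e\<in>set c'. rng E e \<notin> H" using Q_cycle c(1) by blast
  obtain x where "is_exit Q c x" using c(2) by (auto simp: has_exit_def)
  then obtain e where "is_exit E c' e" using Q_exit c'(1) by blast
  then have ext: "extreme_cycle E c'" using ar_a[OF ar c'(2) exit_has] by blast
  show "extreme_cycle Q c" unfolding extreme_iff
  proof (intro conjI allI impI)
    show "has_exit Q c" by fact
  next
    fix p assume p: "is_path Q p" "path_src Q p \<in> cycle_verts Q c"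
    obtain p' where p': "p = map Inl p'" "is_path E p'" "\<forall>e\<in>set p'. rng E e \<notin> H" using Q_path p(1) by blast
    have ne: "p' \<noteq> []" using p'(2) by (auto simp: is_path_def)
    have "path_src E p' \<in> cycle_verts E c'" using p(2) p'(1) c'(1) ne by auto
    then obtain w where w: "w \<in> cycle_verts E c'" "geq E (path_rng E p') w" using ext p'(2) unfolding extreme_iff by blast
    have "w \<notin> H" using cycle_src_notH c' w by blast
    then have "geq Q (Inl (path_rng E p')) (Inl w)" using E_geq_Q w by blast
    then show "\<exists>w\<in>cycle_verts Q c. geq Q (path_rng Q p) w" using w c'(1) p'(1) ne by auto
  qed
next
  fix v assume v: "v \<in> verts Q" "inf_emitter Q v"
  then obtain a where a: "v = Inl a" "a \<in> verts E" "a \<notin> H" by (auto simp: Q_verts)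
  have "out_edges Q v \<subseteq> Inl ` out_edges E a" using a(1) Q_out_edges by auto
  then have "inf_emitter E a" using v(2) unfolding inf_emitter_def using finite_surj by blast
  then obtain c where c: "is_cycle E c" "a \<in> cycle_verts E c" using ar_b[OF ar a(2)] by blast
  have "\<forall>e\<in>set c. rng E e \<notin> H"
  proof
    fix e assume "e \<in> set c"
    then have "(rng E e, a) \<in> (stepr E)\<^sup>*" using cycle_reach[OF c(1) cycle_rng_in[OF c(1)] c(2)] by blast
    then show "rng E e \<notin> H" using her_reach a(3) by blast
  qed
  then have "is_cycle Q (map Inl c)" using Q_cycle_map c by blast
  then show "\<exists>c. is_cycle Q c \<and> v \<in> cycle_verts Q c" using a c by auto
next
  fix \<alpha> assume \<alpha>: "is_inf_path Q \<alpha>"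
  then obtain \<beta> where b: "\<alpha> = Inl \<circ> \<beta>" "is_inf_path E \<beta>" "\<forall>i. rng E (\<beta> i) \<notin> H" using Q_inf_path by blast
  have fin: "finite (bad E \<beta>)" using ar_c[OF ar b(2)] .
  have "bad Q \<alpha> \<subseteq> Inl ` bad E \<beta>"
  proof
    fix x assume x: "x \<in> bad Q \<alpha>"
    then obtain e where e: "x = Inl e" "e \<in> edges E" "rng E e \<notin> H" using Q_edge_Inl by (auto simp: bad_def)
    have s: "src E e \<in> inf_path_verts E \<beta>" using x e b(1) by (auto simp: bad_def)
    have "rng E e \<notin> root E (inf_path_verts E \<beta>)"
    proof
      assume "rng E e \<in> root E (inf_path_verts E \<beta>)"
      then obtain i where i: "geq E (rng E e) (src E (\<beta> i))" by (auto simp: root_def inf_path_verts_def)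
      have "src E (\<beta> i) \<notin> H" using b her_edge unfolding is_inf_path_def by blast
      then have "geq Q (Inl (rng E e)) (Inl (src E (\<beta> i)))" using E_geq_Q i by blast
      moreover have "Inl (rng E e) \<in> verts Q" using e wf by (simp add: wf_dgraph_def)
      moreover have "Inl (src E (\<beta> i)) \<in> inf_path_verts Q \<alpha>" using b(1) by (auto simp: inf_path_verts_def)
      ultimately have "rng Q x \<in> root Q (inf_path_verts Q \<alpha>)" using e by (auto simp: root_def)
      then show False using x by (simp add: bad_def)
    qed
    then show "x \<in> Inl ` bad E \<beta>" using e s by (auto simp: bad_def)
  qed
  then show "finite (bad Q \<alpha>)" using fin finite_subset by blast
qed

end


context sett
begin

lemma EP:
  assumes ar: "all_reflexive E"
  shows "all_reflexive P"
  unfolding all_reflexive_iff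
proof (intro conjI allI impI ballI)
  fix c assume c: "is_cycle P c" "has_exit P c"
  obtain c' where c': "c = map Inl c'" "is_cycle E c'" "\<forall>e\<in>set c'. src E e \<in> H" using P_cycle c(1) by blast
  obtain x where "is_exit P c x" using c(2) by (auto simp: has_exit_def)
  then obtain e where "is_exit E c' e" using P_exit c'(1) by blast
  then have ext: "extreme_cycle E c'" using ar_a[OF ar c'(2) exit_has] by blast
  show "extreme_cycle P c" unfolding extreme_iff
  proof (intro conjI allI impI)
    show "has_exit P c" by fact
  next
    fix p assume p: "is_path P p" "path_src P p \<in> cycle_verts P c"
    then obtain a where "src P (hd p) = Inl a" using c'(1) by (auto simp: path_src_def)
    then obtain p' where p': "p = map Inl p'" "is_path E p'" "\<forall>e\<in>set p'. src E e \<in> H"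
      using P_path_Inl p(1) by blast
    have ne: "p' \<noteq> []" using p'(2) by (auto simp: is_path_def)
    have ps: "path_src E p' \<in> cycle_verts E c'" using p(2) p'(1) c'(1) ne by auto
    then obtain w where w: "w \<in> cycle_verts E c'" "geq E (path_rng E p') w" using ext p'(2) unfolding extreme_iff by blast
    have "path_src E p' \<in> H" using ps c'(3) by (auto simp: cycle_verts_def)
    then have "path_rng E p' \<in> H" using her p'(2) by (auto simp: hereditary_def)
    then have "geq P (Inl (path_rng E p')) (Inl w)" using E_geq_P w by blast
    then show "\<exists>w\<in>cycle_verts P c. geq P (path_rng P p) w" using w c'(1) p'(1) ne by auto
  qed
next
  fix v assume v: "v \<in> verts P" "inf_emitter P v"
  show "\<exists>c. is_cycle P c \<and> v \<in> cycle_verts P c"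
  proof (cases v)
    case (Inr p)
    then have "finite (out_edges P v)" using P_out_edges_Inr finite_subset by fastforce
    then show ?thesis using v(2) by (simp add: inf_emitter_def)
  next
    case (Inl a)
    then have a: "a \<in> H" using v(1) by simp
    then have "out_edges P v = Inl ` out_edges E a" using P_out_edges Inl by blast
    then have "inf_emitter E a" using v(2) unfolding inf_emitter_def by auto
    moreover have "a \<in> verts E" using a H_verts by blast
    ultimately obtain c where c: "is_cycle E c" "a \<in> cycle_verts E c" using ar_b[OF ar] by blast
    have "\<forall>e\<in>set c. src E e \<in> H"
    proof
      fix e assume "e \<in> set c"
      then have "(a, src E e) \<in> (stepr E)\<^sup>*" using cycle_reach[OF c(1) c(2)] by (auto simp: cycle_verts_def)
      then show "src E e \<in> H" using her_reach a by blast
    qed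
    then have "is_cycle P (map Inl c)" using P_cycle_map c by blast
    then show ?thesis using Inl c by auto
  qed
next
  fix \<alpha> assume \<alpha>: "is_inf_path P \<alpha>"
  obtain N where N: "\<forall>i<N. \<not> isl (\<alpha> i)" "\<forall>i\<ge>N. isl (\<alpha> i)" using P_inf_path_eventually[OF \<alpha>] by blast
  define \<beta> where "\<beta> i = projl (\<alpha> (N + i))" for i
  have ab: "\<alpha> (N + i) = Inl (\<beta> i)" for i using N(2) unfolding \<beta>_def by simp
  have "is_inf_path P (Inl \<circ> \<beta>)" using \<alpha> ab unfolding is_inf_path_def comp_def
    by (metis add_Suc_right)
  then have b: "is_inf_path E \<beta>" "\<forall>i. src E (\<beta> i) \<in> H" using P_inf_path_map by blast+
  have fin: "finite (bad E \<beta>)" using ar_c[OF ar b(1)] .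
  have "bad P \<alpha> \<subseteq> Inl ` bad E \<beta> \<union> \<alpha> ` {..<N}"
  proof
    fix x assume x: "x \<in> bad P \<alpha>"
    then obtain k where k: "src P x = src P (\<alpha> k)" by (auto simp: bad_def inf_path_verts_def)
    show "x \<in> Inl ` bad E \<beta> \<union> \<alpha> ` {..<N}"
    proof (cases x)
      case (Inr p)
      have "\<not> isl (\<alpha> k)" using k Inr by (cases "\<alpha> k") auto
      then have "k < N" using N(2) by (meson not_le)
      moreover obtain q where "\<alpha> k = Inr q" using \<open>\<not> isl (\<alpha> k)\<close> by (cases "\<alpha> k") auto
      then have "\<alpha> k = x" using k Inr by simp
      ultimately show ?thesis by auto
    next
      case (Inl e)
      then have e: "e \<in> edges E" "src E e \<in> H" using x by (auto simp: bad_def)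
      have "isl (\<alpha> k)" using k Inl by (cases "\<alpha> k") auto
      then have "k \<ge> N" using N by (meson not_le)
      then have "\<alpha> k = Inl (\<beta> (k - N))" using ab[of "k - N"] by simp
      then have s: "src E e \<in> inf_path_verts E \<beta>" using k Inl by (auto simp: inf_path_verts_def)
      have "rng E e \<notin> root E (inf_path_verts E \<beta>)"
      proof
        assume "rng E e \<in> root E (inf_path_verts E \<beta>)"
        then obtain j where j: "geq E (rng E e) (src E (\<beta> j))" by (auto simp: root_def inf_path_verts_def)
        have rH: "rng E e \<in> H" using her_edge e by blast
        then have "geq P (Inl (rng E e)) (Inl (src E (\<beta> j)))" using E_geq_P j by blast
        moreover have "Inl (src E (\<beta> j)) \<in> inf_path_verts P \<alpha>"
          using ab[of j] unfolding inf_path_verts_def by (metis P_src_Inl rangeI)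
        ultimately have "rng P x \<in> root P (inf_path_verts P \<alpha>)" using Inl rH by (auto simp: root_def)
        then show False using x by (simp add: bad_def)
      qed
      then show ?thesis using e s Inl by (auto simp: bad_def)
    qed
  qed
  then show "finite (bad P \<alpha>)" using fin finite_subset by blast
qed

end


lemma S_empty:
  assumes wf: "wf_dgraph E" and her: "hereditary E H" and SB: "S \<subseteq> breaking E H"
    and arP: "all_reflexive (porcupine_graph E H S)"
  shows "S = {}"
proof (rule ccontr)
  let ?P = "porcupine_graph E H S"
  assume "S \<noteq> {}"
  then obtain v where vS: "v \<in> S" by blast
  then have v: "v \<in> verts E" "v \<notin> H" "inf_emitter E v" "finite {e \<in> out_edges E v. rng E e \<in> verts E - H}"
    using SB by (auto simp: breaking_def)
  have vP: "Inl v \<in> verts ?P" using vS by (simp add: porcupine_graph_def)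
  have sub: "out_edges E v \<subseteq> {e \<in> out_edges E v. rng E e \<in> H} \<union> {e \<in> out_edges E v. rng E e \<in> verts E - H}"
    using wf by (auto simp: out_edges_def wf_dgraph_def)
  have "infinite {e \<in> out_edges E v. rng E e \<in> H}"
    using v(3,4) sub unfolding inf_emitter_def by (meson finite_UnI finite_subset)
  moreover have "Inl ` {e \<in> out_edges E v. rng E e \<in> H} \<subseteq> out_edges ?P (Inl v)"
    using vS by (auto simp: out_edges_def porcupine_graph_def)
  ultimately have "inf_emitter ?P (Inl v)" unfolding inf_emitter_def
    by (meson finite_imageD finite_subset inj_Inl inj_on_subset subset_UNIV)
  then obtain c where c: "is_cycle ?P c" "Inl v \<in> cycle_verts ?P c" using ar_b[OF arP vP] by blast
  have cl: "(Inl v, Inl v) \<in> (stepr ?P)\<^sup>+" using cycle_reach_plus[OF c] .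
  have stepH: "z \<in> Inl ` H" if st: "(Inl a, z) \<in> stepr ?P" for a z
  proof -
    obtain x where x: "x \<in> edges ?P" "src ?P x = Inl a" "rng ?P x = z" using st unfolding stepr_iff by blast
    then obtain e where e: "x = Inl e" by (cases x) (auto simp: porcupine_graph_def)
    then have "e \<in> edges E" "src E e \<in> H \<or> rng E e \<in> H" "z = Inl (rng E e)"
      using x by (auto simp: porcupine_graph_def)
    then show ?thesis
      using her by (metis (no_types, lifting) hereditary_def image_eqI is_path_single path_rng_Cons path_src_Cons)
  qed
  have s1: "\<And>z. (Inl v, z) \<in> stepr ?P \<Longrightarrow> z \<in> Inl ` H" using stepH by blast
  have s2: "\<And>u w. u \<in> Inl ` H \<Longrightarrow> (u, w) \<in> stepr ?P \<Longrightarrow> w \<in> Inl ` H" using stepH by blast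
  have gen: "y \<in> Inl ` H" if "(Inl v, y) \<in> (stepr ?P)\<^sup>+" for y
    using that
  proof (induction rule: trancl_induct)
    case (base y) then show ?case using s1 by blast
  next
    case (step y z) then show ?case using s2 by blast
  qed
  from gen[OF cl] have "v \<in> H" by auto
  then show False using v(2) by auto
qed

locale conv = sett +
  assumes refl: "\<And>v. v \<in> root E H \<Longrightarrow> v \<notin> H \<Longrightarrow> v \<in> root E (perpH E H)"
    and arQ: "all_reflexive Q" and arP: "all_reflexive P"
begin

lemma H_root: "H \<subseteq> root E H"
proof
  fix h assume "h \<in> H"
  then have "h \<in> verts E" "geq E h h" using H_verts by (auto simp: geq_def)
  then show "h \<in> root E H" using \<open>h \<in> H\<close> unfolding root_def by blast
qed

lemma rootH_reach: "u \<in> verts E \<Longrightarrow> (u, h) \<in> (stepr E)\<^sup>* \<Longrightarrow> h \<in> H \<Longrightarrow> u \<in> root E H"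
  using root_iff[of u E H] by blast

lemma perp_reach:
  assumes "u \<in> root E H" "u \<notin> H"
  obtains w where "(u, w) \<in> (stepr E)\<^sup>+" "w \<in> verts E" "w \<notin> root E H" "w \<notin> H"
proof -
  have u: "u \<in> verts E" using assms by (auto simp: root_def)
  obtain w where w: "w \<in> perpH E H" "(u, w) \<in> (stepr E)\<^sup>*"
    using refl[OF assms] root_iff[OF u] by blast
  then have w2: "w \<in> verts E" "w \<notin> root E H" by (auto simp: perpH_def)
  then have "u \<noteq> w" using assms by auto
  then have "(u, w) \<in> (stepr E)\<^sup>+" using w(2) by (simp add: rtrancl_eq_or_trancl)
  then show ?thesis using that w2 H_root by blast
qed

lemma C0:
  assumes c: "is_cycle E c" and cH: "cycle_verts E c \<inter> H = {}" and u: "u \<in> cycle_verts E c"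
    and uh: "(u, h) \<in> (stepr E)\<^sup>*" and h: "h \<in> H"
  shows False
proof -
  have uv: "u \<in> verts E" using u c wf by (auto simp: cycle_verts_def is_cycle_def is_path_def wf_dgraph_def)
  have uH: "u \<in> root E H" "u \<notin> H" using rootH_reach[OF uv uh h] u cH by auto
  obtain w where w: "(u, w) \<in> (stepr E)\<^sup>+" "w \<in> verts E" "w \<notin> root E H" "w \<notin> H"
    using perp_reach[OF uH] by blast
  have rngs: "\<forall>e\<in>set c. rng E e \<notin> H" using cycle_rng_in[OF c] cH by blast
  then have cQ: "is_cycle Q (map Inl c)" using Q_cycle_map c by blast
  have cvR: "z \<in> root E H" if "z \<in> cycle_verts E c" for z
  proof -
    have "(z, u) \<in> (stepr E)\<^sup>*" using cycle_reach[OF c that u] .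
    moreover have "z \<in> verts E" using that c wf by (auto simp: cycle_verts_def is_cycle_def is_path_def wf_dgraph_def)
    ultimately show ?thesis using rootH_reach uh h by (meson rtrancl_trans)
  qed
  have wc: "w \<notin> cycle_verts E c" using cvR w(3) by blast
  obtain e where e: "e \<in> edges E" "src E e \<in> cycle_verts E c" "rng E e \<notin> cycle_verts E c" "(rng E e, w) \<in> (stepr E)\<^sup>*"
    using reach_exit[of u w E "cycle_verts E c"] trancl_into_rtrancl[OF w(1)] u wc by blast
  have "e \<notin> set c" using e(3) cycle_rng_in[OF c] by blast
  moreover have "rng E e \<notin> H" using e(4) w(4) her_reach by blast
  ultimately have "is_exit Q (map Inl c) (Inl e)" using Q_exit e by (auto simp: is_exit_def)
  then have ext: "extreme_cycle Q (map Inl c)" using ar_a[OF arQ cQ exit_has] by blast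
  obtain p where p: "is_path E p" "path_src E p = u" "path_rng E p = w" using trancl_path[OF w(1)] by blast
  have "\<forall>e\<in>set p. rng E e \<notin> H" using path_edges_reach[OF p(1)] p(3) w(4) her_reach by blast
  then have pQ: "is_path Q (map Inl p)" using Q_path_map p by blast
  have ne: "p \<noteq> []" using p(1) by (auto simp: is_path_def)
  have "path_src Q (map Inl p) \<in> cycle_verts Q (map Inl c)" using ne p u by simp
  then obtain z where z: "z \<in> cycle_verts Q (map Inl c)" "geq Q (path_rng Q (map Inl p)) z"
    using ext pQ unfolding extreme_iff by blast
  then obtain z' where z': "z = Inl z'" "z' \<in> cycle_verts E c" by auto
  then have "geq E w z'" using Q_geq_E z(2) p ne by simp
  then have "(w, z') \<in> (stepr E)\<^sup>*" using wf_geq[OF wf] by blast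
  moreover have "(z', h) \<in> (stepr E)\<^sup>*" using cycle_reach[OF c z'(2) u] uh by (meson rtrancl_trans)
  ultimately have "w \<in> root E H" using rootH_reach w(2) h by (meson rtrancl_trans)
  then show False using w(3) by blast
qed

lemma K:
  assumes x: "x \<notin> H" "(x, h) \<in> (stepr E)\<^sup>*" "h \<in> H" "(x, x) \<in> (stepr E)\<^sup>+"
  shows False
proof -
  obtain c where c: "is_cycle E c" "\<forall>y \<in> cycle_verts E c. (x, y) \<in> (stepr E)\<^sup>* \<and> (y, x) \<in> (stepr E)\<^sup>*"
    using closed_reach_cycle[OF x(4)] by blast
  have cH: "cycle_verts E c \<inter> H = {}" using c(2) her_reach x(1) by blast
  obtain y where y: "y \<in> cycle_verts E c" using cycle_nonempty[OF c(1)] by blast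
  have "(y, h) \<in> (stepr E)\<^sup>*" using c(2) y x(2) by (meson rtrancl_trans)
  then show False using C0[OF c(1) cH y _ x(3)] by blast
qed

lemma C2:
  assumes v: "v \<in> verts E" "inf_emitter E v"
  shows "\<exists>c. is_cycle E c \<and> v \<in> cycle_verts E c"
proof (cases "v \<in> H")
  case True
  then have "out_edges P (Inl v) = Inl ` out_edges E v" using P_out_edges by blast
  then have "inf_emitter P (Inl v)" using v(2) unfolding inf_emitter_def by (simp add: finite_image_iff)
  moreover have "Inl v \<in> verts P" using True by simp
  ultimately obtain c where c: "is_cycle P c" "Inl v \<in> cycle_verts P c" using ar_b[OF arP] by blast
  obtain c' where "c = map Inl c'" "is_cycle E c'" using P_cycle c(1) by blast
  then show ?thesis using c(2) by auto
next
  case False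
  define A where "A = {e \<in> out_edges E v. rng E e \<notin> H}"
  show ?thesis
  proof (cases "finite A")
    case False
    then have "inf_emitter Q (Inl v)" using Q_out_edges unfolding A_def inf_emitter_def by (simp add: finite_image_iff)
    moreover have "Inl v \<in> verts Q" using v \<open>v \<notin> H\<close> by simp
    ultimately obtain c where c: "is_cycle Q c" "Inl v \<in> cycle_verts Q c" using ar_b[OF arQ] by blast
    obtain c' where "c = map Inl c'" "is_cycle E c'" using Q_cycle c(1) by blast
    then show ?thesis using c(2) by auto
  next
    case True
    have AA: "A = {e \<in> out_edges E v. rng E e \<in> verts E - H}"
      using wf unfolding A_def by (auto simp: out_edges_def wf_dgraph_def)
    show ?thesis
    proof (cases "A = {}")
      case False
      then have "v \<in> breaking E H" using True AA v \<open>v \<notin> H\<close> by (auto simp: breaking_def)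
      then show ?thesis using B0 by simp
    next
      case Ae: True
      have "out_edges E v \<noteq> {}" using v(2) by (auto simp: inf_emitter_def)
      then obtain e where e: "e \<in> edges E" "src E e = v" by (auto simp: out_edges_def)
      then have "rng E e \<in> H" using Ae unfolding A_def out_edges_def by auto
      then have "v \<in> root E H" using rootH_reach[OF v(1), of "rng E e"] e stepr_edge[OF e(1)] by auto
      then obtain w where w: "(v, w) \<in> (stepr E)\<^sup>+" "w \<notin> H" using perp_reach \<open>v \<notin> H\<close> by metis
      then obtain y where y: "(v, y) \<in> stepr E" "(y, w) \<in> (stepr E)\<^sup>*" by (meson tranclD)
      then obtain f where "f \<in> edges E" "src E f = v" "rng E f = y" by (auto simp: stepr_iff)
      then have "y \<in> H" using Ae unfolding A_def out_edges_def by auto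
      then show ?thesis using her_reach y(2) w(2) by blast
    qed
  qed
qed

lemma FE:
  assumes u: "u \<in> verts E" "u \<notin> H" "(u, h) \<in> (stepr E)\<^sup>*" "h \<in> H"
  shows "finite (out_edges E u)"
proof (rule ccontr)
  assume "infinite (out_edges E u)"
  then obtain c where c: "is_cycle E c" "u \<in> cycle_verts E c" using C2 u(1) by (auto simp: inf_emitter_def)
  have "cycle_verts E c \<inter> H = {}" using cycle_reach[OF c(1) _ c(2)] her_reach u(2) by blast
  then show False using C0[OF c(1) _ c(2) u(3,4)] by blast
qed

lemma C3:
  assumes c: "is_cycle E c" "has_exit E c"
  shows "extreme_cycle E c"
proof (cases "cycle_verts E c \<inter> H = {}")
  case False
  then obtain z where z: "z \<in> cycle_verts E c" "z \<in> H" by blast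
  have cvH: "cycle_verts E c \<subseteq> H" using cycle_reach[OF c(1) z(1)] her_reach z(2) by blast
  then have srcs: "\<forall>e\<in>set c. src E e \<in> H" by (auto simp: cycle_verts_def)
  then have cP: "is_cycle P (map Inl c)" using P_cycle_map c(1) by blast
  obtain e where e: "is_exit E c e" using c(2) by (auto simp: has_exit_def)
  then have "src E e \<in> H" using cvH by (auto simp: is_exit_def)
  then have "is_exit P (map Inl c) (Inl e)" using P_exit e by blast
  then have ext: "extreme_cycle P (map Inl c)" using ar_a[OF arP cP exit_has] by blast
  show ?thesis unfolding extreme_iff
  proof (intro conjI allI impI)
    show "has_exit E c" by fact
  next
    fix p assume p: "is_path E p" "path_src E p \<in> cycle_verts E c"
    have ne: "p \<noteq> []" using p(1) by (auto simp: is_path_def)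
    have pP: "is_path P (map Inl p)" using P_path_map' p cvH by blast
    have "path_src P (map Inl p) \<in> cycle_verts P (map Inl c)" using p ne by simp
    then obtain y where y: "y \<in> cycle_verts P (map Inl c)" "geq P (path_rng P (map Inl p)) y"
      using ext pP unfolding extreme_iff by blast
    then obtain y' where "y = Inl y'" "y' \<in> cycle_verts E c" by auto
    then show "\<exists>w\<in>cycle_verts E c. geq E (path_rng E p) w" using P_geq_E y(2) ne by auto
  qed
next
  case True
  have rngs: "\<forall>e\<in>set c. rng E e \<notin> H" using cycle_rng_in[OF c(1)] True by blast
  then have cQ: "is_cycle Q (map Inl c)" using Q_cycle_map c(1) by blast
  obtain e where e: "is_exit E c e" using c(2) by (auto simp: has_exit_def)
  have "rng E e \<notin> H"
  proof
    assume "rng E e \<in> H"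
    moreover have "(src E e, rng E e) \<in> (stepr E)\<^sup>*" using e stepr_edge by (fastforce simp: is_exit_def)
    ultimately show False using C0[OF c(1) True, of "src E e" "rng E e"] e by (auto simp: is_exit_def)
  qed
  then have "is_exit Q (map Inl c) (Inl e)" using Q_exit e by blast
  then have ext: "extreme_cycle Q (map Inl c)" using ar_a[OF arQ cQ exit_has] by blast
  show ?thesis unfolding extreme_iff
  proof (intro conjI allI impI)
    show "has_exit E c" by fact
  next
    fix p assume p: "is_path E p" "path_src E p \<in> cycle_verts E c"
    have ne: "p \<noteq> []" using p(1) by (auto simp: is_path_def)
    have "\<forall>f\<in>set p. rng E f \<notin> H"
    proof
      fix f assume f: "f \<in> set p"
      have "(path_src E p, src E f) \<in> (stepr E)\<^sup>*" using path_edges_reach[OF p(1) f] by blast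
      moreover have "(src E f, rng E f) \<in> stepr E" using f p(1) stepr_edge by (fastforce simp: is_path_def)
      ultimately have "(path_src E p, rng E f) \<in> (stepr E)\<^sup>*" by simp
      then show "rng E f \<notin> H" using C0[OF c(1) True p(2)] by blast
    qed
    then have pQ: "is_path Q (map Inl p)" using Q_path_map p(1) by blast
    have "path_src Q (map Inl p) \<in> cycle_verts Q (map Inl c)" using p ne by simp
    then obtain y where y: "y \<in> cycle_verts Q (map Inl c)" "geq Q (path_rng Q (map Inl p)) y"
      using ext pQ unfolding extreme_iff by blast
    then obtain y' where "y = Inl y'" "y' \<in> cycle_verts E c" by auto
    then show "\<exists>w\<in>cycle_verts E c. geq E (path_rng E p) w" using Q_geq_E y(2) ne by auto
  qed
qed

end


context conv
begin

lemma BIG: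
  assumes b: "is_inf_path E \<beta>" "\<forall>i. src E (\<beta> i) \<notin> H" "\<forall>i. src E (\<beta> i) \<in> root E H"
  shows False
proof -
  define V where "V = inf_path_verts E \<beta>"
  define T where "T = root E V"
  have bv: "src E (\<beta> i) \<in> verts E" for i using b(1) wf by (simp add: is_inf_path_def wf_dgraph_def)
  have T1: "x \<in> verts E \<and> (\<exists>i. (x, src E (\<beta> i)) \<in> (stepr E)\<^sup>*)" if "x \<in> T" for x
    using that wf_geq[OF wf] unfolding T_def V_def root_def inf_path_verts_def by auto
  have T2: "x \<notin> H" if "x \<in> T" for x
    using T1[OF that] b(2) her_reach by blast
  have T3: "\<exists>h\<in>H. (x, h) \<in> (stepr E)\<^sup>*" if xT: "x \<in> T" for x
  proof -
    obtain i where i: "(x, src E (\<beta> i)) \<in> (stepr E)\<^sup>*" using T1[OF xT] by blast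
    obtain h where "h \<in> H" "(src E (\<beta> i), h) \<in> (stepr E)\<^sup>*" using b(3) root_iff[OF bv[of i], of H] by blast
    then show ?thesis using i by (meson rtrancl_trans)
  qed
  have T4: "x \<in> T" if xy: "x \<in> verts E" "(x, y) \<in> (stepr E)\<^sup>*" "y \<in> T" for x y
  proof -
    obtain i where i: "(y, src E (\<beta> i)) \<in> (stepr E)\<^sup>*" using T1[OF xy(3)] by blast
    then have "(x, src E (\<beta> i)) \<in> (stepr E)\<^sup>*" using xy(2) by (meson rtrancl_trans)
    moreover have "src E (\<beta> i) \<in> V" unfolding V_def inf_path_verts_def by auto
    ultimately show ?thesis unfolding T_def using root_iff[OF xy(1)] by blast
  qed
  have Tv: "src E (\<beta> i) \<in> T" for i
    using T4[OF bv[of i], of "src E (\<beta> i)"] root_iff[OF bv[of i], of V] unfolding T_def V_def inf_path_verts_def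
    by auto
  have T5: "\<exists>j. (x, src E (\<beta> j)) \<in> (stepr E)\<^sup>+" if xT: "x \<in> T" for x
  proof -
    obtain i where i: "(x, src E (\<beta> i)) \<in> (stepr E)\<^sup>*" using T1[OF xT] by blast
    moreover have "(src E (\<beta> i), src E (\<beta> (Suc i))) \<in> (stepr E)\<^sup>+" using inf_path_reach_plus[OF b(1)] by simp
    ultimately show ?thesis by (meson rtrancl_trancl_trancl)
  qed
  have TR: "x \<in> root E H" if xT: "x \<in> T" for x
  proof -
    obtain h where "h \<in> H" "(x, h) \<in> (stepr E)\<^sup>*" using T3[OF xT] by blast
    then show ?thesis using rootH_reach T1[OF xT] by blast
  qed
  have noclosed: "(x, x) \<notin> (stepr E)\<^sup>+" if "x \<in> T" for x
    using K[OF T2[OF that]] T3[OF that] by blast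
  define X where "X = {x \<in> T. \<exists>e\<in>edges E. src E e = x \<and> rng E e \<notin> T \<and> rng E e \<notin> H}"
  define Pseg where "Pseg u s \<longleftrightarrow> is_path E s \<and> path_src E s = u \<and> path_rng E s \<in> T \<and> (\<exists>i<length s. src E (s ! i) \<in> X)" for u s
  have seg_ex: "\<exists>s. Pseg u s" if u: "u \<in> T" for u
  proof -
    have uR: "u \<in> root E H" using TR[OF u] .
    obtain w where w: "(u, w) \<in> (stepr E)\<^sup>+" "w \<notin> root E H" "w \<notin> H" using perp_reach[OF uR T2[OF u]] by blast
    have wT: "w \<notin> T" using w(2) TR by blast
    obtain e where e: "e \<in> edges E" "src E e \<in> T" "rng E e \<notin> T" "(u, src E e) \<in> (stepr E)\<^sup>*" "(rng E e, w) \<in> (stepr E)\<^sup>*"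
      using reach_exit[of u w E T] trancl_into_rtrancl[OF w(1)] u wT by blast
    have "rng E e \<notin> H" using e(5) w(3) her_reach by blast
    then have xX: "src E e \<in> X" unfolding X_def using e by blast
    obtain j where j: "(src E e, src E (\<beta> j)) \<in> (stepr E)\<^sup>+" using T5 e(2) by blast
    obtain q where q: "is_path E q" "path_src E q = src E e" "path_rng E q = src E (\<beta> j)" using trancl_path[OF j] by blast
    have qne: "q \<noteq> []" using q(1) by (auto simp: is_path_def)
    show ?thesis
    proof (cases "u = src E e")
      case True
      have "q ! 0 = hd q" using qne by (simp add: hd_conv_nth)
      then have "src E (q ! 0) \<in> X" using q(2) xX by (simp add: path_src_def)
      moreover have "0 < length q" using qne by simp
      ultimately have ex: "\<exists>i<length q. src E (q ! i) \<in> X" by blast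
      have "path_rng E q \<in> T" using q(3) Tv by simp
      then have "Pseg u q" unfolding Pseg_def using q(1,2) True ex by blast
      then show ?thesis by blast
    next
      case False
      then have "(u, src E e) \<in> (stepr E)\<^sup>+" using e(4) rtranclD by metis
      then obtain r where r: "is_path E r" "path_src E r = u" "path_rng E r = src E e" using trancl_path[of u "src E e" E] by blast
      have "path_rng E r = path_src E q" using r(3) q(2) by simp
      then have rq: "is_path E (r @ q)" "path_src E (r @ q) = u" "path_rng E (r @ q) = src E (\<beta> j)"
        using path_append[OF r(1) q(1)] r(2) q(3) by simp_all
      have "(r @ q) ! length r = hd q" using qne by (simp add: nth_append hd_conv_nth)
      then have "src E ((r @ q) ! length r) \<in> X" using q(2) xX by (simp add: path_src_def)
      moreover have "length r < length (r @ q)" using qne by simp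
      ultimately have ex: "\<exists>i<length (r @ q). src E ((r @ q) ! i) \<in> X" by blast
      have "path_rng E (r @ q) \<in> T" using rq(3) Tv by simp
      then have "Pseg u (r @ q)" unfolding Pseg_def using rq(1,2) ex by blast
      then show ?thesis by blast
    qed
  qed
  define seg where "seg u = (SOME s. Pseg u s)" for u
  have seg: "Pseg u (seg u)" if "u \<in> T" for u
    unfolding seg_def using seg_ex[OF that] by (rule someI_ex)
  define Inv where "Inv l \<longleftrightarrow> is_path E l \<and> path_rng E l \<in> T" for l
  define nxt where "nxt l = (if tl l = [] then seg (path_rng E l) else tl l)" for l
  have inv_nxt: "Inv (nxt l)" if "Inv l" for l
  proof (cases "tl l = []")
    case True
    then show ?thesis using seg[of "path_rng E l"] that unfolding Inv_def nxt_def Pseg_def by auto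
  next
    case False
    then have "1 < length l" by (cases l) auto
    then show ?thesis using path_drop[of E l 1] that unfolding Inv_def nxt_def using False by (simp add: drop_Suc)
  qed
  have conn: "rng E (hd l) = src E (hd (nxt l))" if "Inv l" for l
  proof (cases "tl l = []")
    case True
    have ne: "l \<noteq> []" using that by (auto simp: Inv_def is_path_def)
    then have "l = [hd l]" using True by (cases l) auto
    then have "path_rng E l = rng E (hd l)" by (metis last_ConsL path_rng_def)
    moreover have "path_src E (seg (path_rng E l)) = path_rng E l" using seg[of "path_rng E l"] that
      unfolding Inv_def Pseg_def by blast
    ultimately show ?thesis using True unfolding nxt_def path_src_def by simp
  next
    case False
    then have l1: "1 < length l" by (cases l) auto
    have "rng E (l ! 0) = src E (l ! 1)" using that l1 unfolding Inv_def is_path_def by auto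
    moreover have "hd l = l ! 0" using l1 by (cases l) auto
    ultimately show ?thesis using False l1 unfolding nxt_def by (simp add: hd_conv_nth nth_tl)
  qed
  define st where "st n = (nxt ^^ n) (seg (src E (\<beta> 0)))" for n
  have st_Suc: "st (Suc n) = nxt (st n)" for n unfolding st_def by simp
  have inv_st: "Inv (st n)" for n
  proof (induction n)
    case 0
    then show ?case using seg[OF Tv[of 0]] unfolding st_def Inv_def Pseg_def by auto
  next
    case (Suc n) then show ?case using inv_nxt st_Suc by simp
  qed
  define a where "a n = hd (st n)" for n
  have ainf: "is_inf_path E a"
    unfolding is_inf_path_def
  proof
    fix i
    have "st i \<noteq> []" "set (st i) \<subseteq> edges E" using inv_st[of i] unfolding Inv_def is_path_def by auto
    then have "a i \<in> edges E" unfolding a_def by auto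
    moreover have "rng E (a i) = src E (a (Suc i))" unfolding a_def using conn[OF inv_st[of i]] st_Suc by simp
    ultimately show "a i \<in> edges E \<and> rng E (a i) = src E (a (Suc i))" by blast
  qed
  have aT: "src E (a n) \<in> T" for n
  proof -
    have l: "is_path E (st n)" "path_rng E (st n) \<in> T" using inv_st[of n] unfolding Inv_def by auto
    have "(src E (a n), path_rng E (st n)) \<in> (stepr E)\<^sup>*" using path_trancl[OF l(1)] unfolding a_def path_src_def by simp
    moreover have "src E (a n) \<in> verts E" using ainf wf by (simp add: is_inf_path_def wf_dgraph_def)
    ultimately show ?thesis using T4 l(2) by blast
  qed
  have arng: "rng E (a n) \<notin> H" for n using ainf aT[of "Suc n"] T2 unfolding is_inf_path_def by metis
  have aQ: "is_inf_path Q (Inl \<circ> a)" using Q_inf_path_map ainf arng by blast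
  have finQ: "finite (bad Q (Inl \<circ> a))" using ar_c[OF arQ aQ] .
  have norep: "src E (a i) \<noteq> src E (a j)" if "i < j" for i j
    using inf_path_reach_plus[OF ainf that] noclosed[OF aT[of i]] by auto
  have st_drop: "st (n + i) = drop i (st n)" if "i < length (st n)" for n i
    using that
  proof (induction i)
    case 0 then show ?case by simp
  next
    case (Suc i)
    then have "st (n + i) = drop i (st n)" by simp
    moreover have "tl (drop i (st n)) \<noteq> []" using Suc.prems by (simp add: drop_Suc[symmetric] tl_drop)
    ultimately show ?case using st_Suc[of "n + i"] unfolding nxt_def by (simp add: tl_drop drop_Suc)
  qed
  have st_seg: "st (n + length (st n)) = seg (path_rng E (st n))" for n
  proof -
    define l where "l = st n"
    have il: "is_path E l" using inv_st[of n] unfolding l_def Inv_def by auto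
    then have L: "0 < length l" by (auto simp: is_path_def)
    have "length l - 1 < length (st n)" using L unfolding l_def by simp
    from st_drop[OF this] have d: "st (n + (length l - 1)) = drop (length l - 1) l" unfolding l_def .
    have pr: "path_rng E (drop (length l - 1) l) = path_rng E l" using path_drop[OF il, of "length l - 1"] L by simp
    have tl0: "tl (drop (length l - 1) l) = []" by (simp add: tl_drop)
    have eq: "Suc (n + (length l - 1)) = n + length l" using L by simp
    have "st (Suc (n + (length l - 1))) = nxt (st (n + (length l - 1)))" by (rule st_Suc)
    also have "\<dots> = nxt (drop (length l - 1) l)" using d by simp
    also have "\<dots> = seg (path_rng E l)" unfolding nxt_def using tl0 pr by simp
    finally show ?thesis using eq unfolding l_def by metis
  qed
  have recur: "\<exists>n'\<ge>n. src E (a n') \<in> X" for n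
  proof -
    define l where "l = st n"
    define s where "s = st (n + length l)"
    have sd: "s = seg (path_rng E l)" using st_seg unfolding s_def l_def by simp
    have "path_rng E l \<in> T" using inv_st[of n] unfolding l_def Inv_def by simp
    then obtain i where i: "i < length s" "src E (s ! i) \<in> X" using seg sd unfolding Pseg_def by metis
    have "st (n + length l + i) = drop i s" using st_drop[of i "n + length l"] i(1) unfolding s_def by simp
    then have "a (n + length l + i) = s ! i" unfolding a_def using i(1) by (simp add: hd_drop_conv_nth)
    then show ?thesis using i(2) by (metis le_add1 add.assoc)
  qed
  define I where "I = {n. src E (a n) \<in> X}"
  have infI: "infinite I"
  proof
    assume "finite I"
    then obtain m where m: "\<forall>n\<in>I. n \<le> m" using finite_nat_set_iff_bounded_le by blast
    obtain n' where "n' \<ge> Suc m" "src E (a n') \<in> X" using recur by blast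
    then show False using m unfolding I_def by force
  qed
  have injI: "inj_on (\<lambda>n. src E (a n)) I"
    unfolding inj_on_def using norep by (metis linorder_neqE_nat)
  define Y where "Y = (\<lambda>n. src E (a n)) ` I"
  have infY: "infinite Y" unfolding Y_def using infI injI finite_image_iff by blast
  have "Y \<subseteq> projl ` src Q ` bad Q (Inl \<circ> a)"
  proof
    fix z assume "z \<in> Y"
    then obtain n where n: "z = src E (a n)" "src E (a n) \<in> X" unfolding Y_def I_def by auto
    then obtain e where e: "e \<in> edges E" "src E e = src E (a n)" "rng E e \<notin> T" "rng E e \<notin> H"
      unfolding X_def by blast
    have "rng Q (Inl e) \<notin> root Q (inf_path_verts Q (Inl \<circ> a))"
    proof
      assume "rng Q (Inl e) \<in> root Q (inf_path_verts Q (Inl \<circ> a))"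
      then obtain m where "geq Q (Inl (rng E e)) (Inl (src E (a m)))"
        unfolding root_def inf_path_verts_def by auto
      then have "geq E (rng E e) (src E (a m))" using Q_geq_E by blast
      then have "rng E e \<in> verts E" "(rng E e, src E (a m)) \<in> (stepr E)\<^sup>*" using wf_geq[OF wf] by auto
      then have "rng E e \<in> T" using T4 aT by blast
      then show False using e(3) by blast
    qed
    moreover have "src Q (Inl e) \<in> inf_path_verts Q (Inl \<circ> a)" using e(2) by (auto simp: inf_path_verts_def)
    moreover have "Inl e \<in> edges Q" using e by simp
    ultimately have "Inl e \<in> bad Q (Inl \<circ> a)" unfolding bad_def by blast
    moreover have "z = projl (src Q (Inl e))" using n e by simp
    ultimately show "z \<in> projl ` src Q ` bad Q (Inl \<circ> a)" by blast
  qed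
  then have "finite Y" using finQ finite_subset by blast
  then show False using infY by blast
qed

end


context conv
begin

lemma C4:
  assumes b: "is_inf_path E \<beta>"
  shows "finite (bad E \<beta>)"
proof (cases "\<exists>i. src E (\<beta> i) \<in> H")
  case True
  define V where "V = inf_path_verts E \<beta>"
  define i0 where "i0 = (LEAST i. src E (\<beta> i) \<in> H)"
  have i0H: "src E (\<beta> i0) \<in> H" using True unfolding i0_def by (rule LeastI_ex)
  have before: "src E (\<beta> j) \<notin> H" if "j < i0" for j using that not_less_Least unfolding i0_def by blast
  have after: "src E (\<beta> k) \<in> H" if "k \<ge> i0" for k using inf_path_reach[OF b that] i0H her_reach by blast
  have bv: "src E (\<beta> i) \<in> verts E" for i using b wf by (simp add: is_inf_path_def wf_dgraph_def)
  define \<gamma> where "\<gamma> k = \<beta> (i0 + k)" for k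
  have gE: "is_inf_path E \<gamma>" using b unfolding is_inf_path_def \<gamma>_def by simp
  have gH: "\<forall>k. src E (\<gamma> k) \<in> H" using after unfolding \<gamma>_def by simp
  have gP: "is_inf_path P (Inl \<circ> \<gamma>)" using P_inf_path_map gE gH by blast
  have fin1: "finite (Inl -` bad P (Inl \<circ> \<gamma>))" using ar_c[OF arP gP] by (simp add: finite_vimageI)
  have fin2: "finite (\<Union>j<i0. out_edges E (src E (\<beta> j)))"
  proof (rule finite_UN_I)
    fix j assume "j \<in> {..<i0}"
    then have "j < i0" by simp
    then have "(src E (\<beta> j), src E (\<beta> i0)) \<in> (stepr E)\<^sup>*" using inf_path_reach[OF b] by simp
    then show "finite (out_edges E (src E (\<beta> j)))"
      using FE[OF bv before[OF \<open>j < i0\<close>] _ i0H] by blast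
  qed simp
  have "bad E \<beta> \<subseteq> (\<Union>j<i0. out_edges E (src E (\<beta> j))) \<union> (Inl -` bad P (Inl \<circ> \<gamma>))"
  proof
    fix e assume e: "e \<in> bad E \<beta>"
    then obtain k where k: "e \<in> edges E" "src E e = src E (\<beta> k)" "rng E e \<notin> root E (inf_path_verts E \<beta>)"
      by (auto simp: bad_def inf_path_verts_def)
    show "e \<in> (\<Union>j<i0. out_edges E (src E (\<beta> j))) \<union> (Inl -` bad P (Inl \<circ> \<gamma>))"
    proof (cases "k < i0")
      case True then show ?thesis using k by (auto simp: out_edges_def)
    next
      case False
      then have kk: "k = i0 + (k - i0)" by simp
      have sH: "src E e \<in> H" using after False k(2) by simp
      have "Inl e \<in> edges P" using k(1) sH by simp
      moreover have "src P (Inl e) \<in> inf_path_verts P (Inl \<circ> \<gamma>)"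
        using k(2) kk unfolding \<gamma>_def inf_path_verts_def by (auto intro: rangeI[of _ "k - i0"]) (metis rangeI)
      moreover have "rng P (Inl e) \<notin> root P (inf_path_verts P (Inl \<circ> \<gamma>))"
      proof
        assume "rng P (Inl e) \<in> root P (inf_path_verts P (Inl \<circ> \<gamma>))"
        then obtain m where "geq P (Inl (rng E e)) (Inl (src E (\<gamma> m)))"
          unfolding root_def inf_path_verts_def by auto
        then have "geq E (rng E e) (src E (\<beta> (i0 + m)))" using P_geq_E unfolding \<gamma>_def by blast
        moreover have "rng E e \<in> verts E" using k(1) wf by (simp add: wf_dgraph_def)
        ultimately have "rng E e \<in> root E (inf_path_verts E \<beta>)" unfolding root_def inf_path_verts_def by blast
        then show False using k(3) by blast
      qed
      ultimately have "Inl e \<in> bad P (Inl \<circ> \<gamma>)" unfolding bad_def by blast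
      then show ?thesis by simp
    qed
  qed
  then show ?thesis using fin1 fin2 finite_subset by blast
next
  case False
  then have nH: "\<forall>i. src E (\<beta> i) \<notin> H" by blast
  have bv: "src E (\<beta> i) \<in> verts E" for i using b wf by (simp add: is_inf_path_def wf_dgraph_def)
  have rH: "\<forall>i. rng E (\<beta> i) \<notin> H" using b nH unfolding is_inf_path_def by metis
  have bQ: "is_inf_path Q (Inl \<circ> \<beta>)" using Q_inf_path_map b rH by blast
  have fin1: "finite (Inl -` bad Q (Inl \<circ> \<beta>))" using ar_c[OF arQ bQ] by (simp add: finite_vimageI)
  define W where "W = {e \<in> edges E. src E e \<in> inf_path_verts E \<beta> \<and> rng E e \<in> H}"
  have sub: "bad E \<beta> \<subseteq> (Inl -` bad Q (Inl \<circ> \<beta>)) \<union> W"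
  proof
    fix e assume e: "e \<in> bad E \<beta>"
    then have k: "e \<in> edges E" "src E e \<in> inf_path_verts E \<beta>" "rng E e \<notin> root E (inf_path_verts E \<beta>)"
      by (auto simp: bad_def)
    show "e \<in> (Inl -` bad Q (Inl \<circ> \<beta>)) \<union> W"
    proof (cases "rng E e \<in> H")
      case True then show ?thesis using k unfolding W_def by blast
    next
      case False
      have "Inl e \<in> edges Q" using k(1) False by simp
      moreover have "src Q (Inl e) \<in> inf_path_verts Q (Inl \<circ> \<beta>)" using k(2) by simp
      moreover have "rng Q (Inl e) \<notin> root Q (inf_path_verts Q (Inl \<circ> \<beta>))"
      proof
        assume "rng Q (Inl e) \<in> root Q (inf_path_verts Q (Inl \<circ> \<beta>))"
        then obtain m where "geq Q (Inl (rng E e)) (Inl (src E (\<beta> m)))"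
          unfolding root_def inf_path_verts_def by auto
        then have "geq E (rng E e) (src E (\<beta> m))" using Q_geq_E by blast
        moreover have "rng E e \<in> verts E" using k(1) wf by (simp add: wf_dgraph_def)
        ultimately have "rng E e \<in> root E (inf_path_verts E \<beta>)" unfolding root_def inf_path_verts_def by blast
        then show False using k(3) by blast
      qed
      ultimately have "Inl e \<in> bad Q (Inl \<circ> \<beta>)" unfolding bad_def by blast
      then show ?thesis by simp
    qed
  qed
  have srcR: "src E e \<in> root E H" if "e \<in> edges E" "rng E e \<in> H" for e
  proof -
    have "(src E e, rng E e) \<in> (stepr E)\<^sup>*" using stepr_edge[OF that(1)] by simp
    moreover have "src E e \<in> verts E" using that(1) wf by (simp add: wf_dgraph_def)
    ultimately show ?thesis using rootH_reach that(2) by blast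
  qed
  have finW: "finite W"
  proof (cases "\<exists>N. \<forall>k\<ge>N. src E (\<beta> k) \<notin> root E H")
    case True
    then obtain N where N: "\<forall>k\<ge>N. src E (\<beta> k) \<notin> root E H" by blast
    have "W \<subseteq> (\<Union>j\<in>{j. j < N \<and> src E (\<beta> j) \<in> root E H}. out_edges E (src E (\<beta> j)))"
    proof
      fix e assume e: "e \<in> W"
      then obtain k where k: "e \<in> edges E" "src E e = src E (\<beta> k)" "rng E e \<in> H"
        unfolding W_def inf_path_verts_def by auto
      then have "src E (\<beta> k) \<in> root E H" using srcR by metis
      then have "k < N" using N by (meson not_le)
      then show "e \<in> (\<Union>j\<in>{j. j < N \<and> src E (\<beta> j) \<in> root E H}. out_edges E (src E (\<beta> j)))"
        using k \<open>src E (\<beta> k) \<in> root E H\<close> by (auto simp: out_edges_def)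
    qed
    moreover have "finite (\<Union>j\<in>{j. j < N \<and> src E (\<beta> j) \<in> root E H}. out_edges E (src E (\<beta> j)))"
    proof (rule finite_UN_I)
      show "finite {j. j < N \<and> src E (\<beta> j) \<in> root E H}" by simp
    next
      fix j assume j: "j \<in> {j. j < N \<and> src E (\<beta> j) \<in> root E H}"
      then obtain h where "h \<in> H" "(src E (\<beta> j), h) \<in> (stepr E)\<^sup>*" using root_iff[OF bv[of j], of H] by blast
      then show "finite (out_edges E (src E (\<beta> j)))" using FE[OF bv nH[rule_format]] by blast
    qed
    ultimately show ?thesis using finite_subset by blast
  next
    case False
    have "src E (\<beta> i) \<in> root E H" for i
    proof -
      obtain k where k: "k \<ge> i" "src E (\<beta> k) \<in> root E H" using False by blast
      then obtain h where "h \<in> H" "(src E (\<beta> k), h) \<in> (stepr E)\<^sup>*" using root_iff[OF bv[of k], of H] by blast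
      moreover have "(src E (\<beta> i), src E (\<beta> k)) \<in> (stepr E)\<^sup>*" using inf_path_reach[OF b k(1)] .
      ultimately show ?thesis using rootH_reach[OF bv[of i]] by (meson rtrancl_trans)
    qed
    then have False using BIG[OF b nH] by blast
    then show ?thesis by blast
  qed
  show ?thesis using sub fin1 finW finite_subset by blast
qed

lemma conv_main: "all_reflexive E"
  unfolding all_reflexive_iff using C2 C3 C4 by blast

end

context sett
begin

lemma strong1:
  assumes ar: "all_reflexive E" and ex: "\<forall>c. is_cycle E c \<longrightarrow> has_exit E c"
  shows "(\<forall>c. is_cycle Q c \<longrightarrow> has_exit Q c) \<and> (\<forall>c. is_cycle P c \<longrightarrow> has_exit P c)"
proof (intro conjI allI impI)
  fix c assume c: "is_cycle Q c"
  obtain c' where c': "c = map Inl c'" "is_cycle E c'" "\<forall>e\<in>set c'. rng E e \<notin> H" using Q_cycle c by blast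
  obtain e where e: "is_exit E c' e" using ex c'(2) by (auto simp: has_exit_def)
  have ext: "extreme_cycle E c'" using ar_a[OF ar c'(2) exit_has[OF e]] .
  have "rng E e \<notin> H"
  proof
    assume rH: "rng E e \<in> H"
    have ee: "e \<in> edges E" "src E e \<in> cycle_verts E c'" using e by (auto simp: is_exit_def)
    then have "is_path E [e]" "path_src E [e] \<in> cycle_verts E c'" by auto
    then have "\<exists>w \<in> cycle_verts E c'. geq E (path_rng E [e]) w" using ext unfolding extreme_iff by blast
    then obtain w where w: "w \<in> cycle_verts E c'" "geq E (rng E e) w" by (auto simp: path_rng_def)
    then have "w \<in> H" using wf_geq[OF wf] rH her_reach by blast
    then show False using cycle_src_notH[OF c'(2,3) w(1)] by blast
  qed
  then have "is_exit Q c (Inl e)" using Q_exit c'(1) e by blast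
  then show "has_exit Q c" by (rule exit_has)
next
  fix c assume c: "is_cycle P c"
  obtain c' where c': "c = map Inl c'" "is_cycle E c'" "\<forall>e\<in>set c'. src E e \<in> H" using P_cycle c by blast
  obtain e where e: "is_exit E c' e" using ex c'(2) by (auto simp: has_exit_def)
  then have "src E e \<in> H" using c'(3) by (auto simp: is_exit_def cycle_verts_def)
  then have "is_exit P c (Inl e)" using P_exit c'(1) e by blast
  then show "has_exit P c" by (rule exit_has)
qed

lemma strong2:
  assumes exQ: "\<forall>c. is_cycle Q c \<longrightarrow> has_exit Q c" and exP: "\<forall>c. is_cycle P c \<longrightarrow> has_exit P c"
    and c: "is_cycle E c"
  shows "has_exit E c"
proof (cases "cycle_verts E c \<inter> H = {}")
  case False
  then obtain z where z: "z \<in> cycle_verts E c" "z \<in> H" by blast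
  have "cycle_verts E c \<subseteq> H" using cycle_reach[OF c z(1)] her_reach z(2) by blast
  then have "\<forall>e\<in>set c. src E e \<in> H" by (auto simp: cycle_verts_def)
  then have "is_cycle P (map Inl c)" using P_cycle_map c by blast
  then obtain x where "is_exit P (map Inl c) x" using exP by (auto simp: has_exit_def)
  then show ?thesis using P_exit exit_has by metis
next
  case True
  have "\<forall>e\<in>set c. rng E e \<notin> H" using cycle_rng_in[OF c] True by blast
  then have "is_cycle Q (map Inl c)" using Q_cycle_map c by blast
  then obtain x where "is_exit Q (map Inl c) x" using exQ by (auto simp: has_exit_def)
  then show ?thesis using Q_exit exit_has by metis
qed

end


lemma S_is_breaking:
  assumes wf: "wf_dgraph E" and rp: "reflexive_pair E H S"
  shows "S = breaking E H"
proof -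
  have adm: "hereditary E H" "S \<subseteq> breaking E H" using rp by (auto simp: reflexive_pair_def admissible_def)
  have Hp: "H = perpH E (perpH E H)" and Sp: "S = perpS E (perpH E H) (perpS E H S)"
    using rp by (auto simp: reflexive_pair_def)
  have HV: "H \<subseteq> verts E" using adm(1) by (simp add: hereditary_def)
  have disj: "v \<notin> breaking E (perpH E H)" if v: "v \<in> breaking E H" for v
  proof
    assume v2: "v \<in> breaking E (perpH E H)"
    have vv: "v \<in> verts E" "v \<notin> H" "inf_emitter E v" "finite {e \<in> out_edges E v. rng E e \<in> verts E - H}"
      using v by (auto simp: breaking_def)
    have sub: "out_edges E v \<subseteq> {e \<in> out_edges E v. rng E e \<in> H} \<union> {e \<in> out_edges E v. rng E e \<in> verts E - H}"
      using wf by (auto simp: out_edges_def wf_dgraph_def)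
    have infH: "infinite {e \<in> out_edges E v. rng E e \<in> H}"
      using vv(3,4) sub unfolding inf_emitter_def by (meson finite_UnI finite_subset)
    then obtain e where e: "e \<in> out_edges E v" "rng E e \<in> H" by (metis (no_types, lifting) empty_Collect_eq finite.emptyI)
    have "v \<in> root E H"
    proof -
      have "e \<in> edges E" "src E e = v" using e by (auto simp: out_edges_def)
      then have "geq E v (rng E e)" unfolding geq_def
        by (intro disjI2 exI[of _ "[e]"]) (auto simp: path_rng_def)
      then show ?thesis using vv(1) e(2) by (auto simp: root_def)
    qed
    have "H \<subseteq> root E H" using HV by (auto simp: root_def geq_def)
    then have "{e \<in> out_edges E v. rng E e \<in> H} \<subseteq> {e \<in> out_edges E v. rng E e \<in> verts E - perpH E H}"
      using HV by (auto simp: perpH_def)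
    moreover have "finite {e \<in> out_edges E v. rng E e \<in> verts E - perpH E H}"
      using v2 by (simp add: breaking_def)
    ultimately show False using infH finite_subset by blast
  qed
  have "breaking E H \<subseteq> S"
  proof
    fix v assume v: "v \<in> breaking E H"
    have "S = breaking E H - (breaking E (perpH E H) - S)" using Sp Hp[symmetric] by (simp add: perpS_def)
    then show "v \<in> S" using v disj[OF v] by blast
  qed
  then show ?thesis using adm(2) by blast
qed

lemma refl_cond:
  assumes rp: "reflexive_pair E H S" and "v \<in> root E H" "v \<notin> H"
  shows "v \<in> root E (perpH E H)"
proof -
  have Hp: "H = perpH E (perpH E H)" using rp by (auto simp: reflexive_pair_def)
  have "v \<in> verts E" using assms(2) by (simp add: root_def)
  then show ?thesis using assms(3) Hp unfolding perpH_def by blast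
qed

theorem proposition3p17:
  fixes E :: "('v, 'e) dgraph" and H S :: "'v set"
  assumes "wf_dgraph E"
    and "reflexive_pair E H S"
  shows "(all_reflexive E \<longleftrightarrow>
            all_reflexive (quotient_graph E H S) \<and> all_reflexive (porcupine_graph E H S))
       \<and> (strongly_all_reflexive E \<longleftrightarrow>
            strongly_all_reflexive (quotient_graph E H S) \<and> strongly_all_reflexive (porcupine_graph E H S))"
proof -
  note wf = assms(1) and rp = assms(2)
  have her: "hereditary E H" and SB: "S \<subseteq> breaking E H"
    using rp by (auto simp: reflexive_pair_def admissible_def)
  have SeqB: "S = breaking E H" using S_is_breaking[OF wf rp] .
  have fwd: "all_reflexive (quotient_graph E H S) \<and> all_reflexive (porcupine_graph E H S) \<and> S = {}"
    if ar: "all_reflexive E"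
  proof -
    have B0: "breaking E H = {}" using breaking_empty[OF wf her ar] .
    then have s: "sett E H" using wf her by (simp add: sett_def)
    have S0: "S = {}" using SeqB B0 by simp
    show ?thesis using sett.EQ[OF s ar] sett.EP[OF s ar] S0 by simp
  qed
  have bwd: "all_reflexive E \<and> S = {}"
    if arQ: "all_reflexive (quotient_graph E H S)" and arP: "all_reflexive (porcupine_graph E H S)"
  proof -
    have S0: "S = {}" using S_empty[OF wf her SB arP] .
    then have B0: "breaking E H = {}" using SeqB by simp
    then have s: "sett E H" using wf her by (simp add: sett_def)
    have c: "conv E H"
      apply (rule conv.intro[OF s])
      apply (rule conv_axioms.intro)
      using refl_cond[OF rp] arQ arP S0 by auto
    show ?thesis using conv.conv_main[OF c] S0 by simp
  qed
  have part1: "all_reflexive E \<longleftrightarrow>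
            all_reflexive (quotient_graph E H S) \<and> all_reflexive (porcupine_graph E H S)"
    using fwd bwd by blast
  have part2: "strongly_all_reflexive E \<longleftrightarrow>
            strongly_all_reflexive (quotient_graph E H S) \<and> strongly_all_reflexive (porcupine_graph E H S)"
  proof
    assume sar: "strongly_all_reflexive E"
    then have ar: "all_reflexive E" and ex: "\<forall>c. is_cycle E c \<longrightarrow> has_exit E c"
      by (auto simp: strongly_all_reflexive_def)
    have B0: "breaking E H = {}" using breaking_empty[OF wf her ar] .
    then have s: "sett E H" using wf her by (simp add: sett_def)
    have S0: "S = {}" using SeqB B0 by simp
    show "strongly_all_reflexive (quotient_graph E H S) \<and> strongly_all_reflexive (porcupine_graph E H S)"
      using fwd[OF ar] sett.strong1[OF s ar ex] S0 by (simp add: strongly_all_reflexive_def)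
  next
    assume h: "strongly_all_reflexive (quotient_graph E H S) \<and> strongly_all_reflexive (porcupine_graph E H S)"
    then have arQ: "all_reflexive (quotient_graph E H S)" and arP: "all_reflexive (porcupine_graph E H S)"
      by (auto simp: strongly_all_reflexive_def)
    have r: "all_reflexive E" "S = {}" using bwd[OF arQ arP] by auto
    have B0: "breaking E H = {}" using SeqB r(2) by simp
    then have s: "sett E H" using wf her by (simp add: sett_def)
    have exQ: "\<forall>c. is_cycle (quotient_graph E H {}) c \<longrightarrow> has_exit (quotient_graph E H {}) c"
      and exP: "\<forall>c. is_cycle (porcupine_graph E H {}) c \<longrightarrow> has_exit (porcupine_graph E H {}) c"
      using h r(2) by (auto simp: strongly_all_reflexive_def)
    show "strongly_all_reflexive E"
      unfolding strongly_all_reflexive_def using r(1) sett.strong2[OF s exQ exP] by blast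
  qed
  show ?thesis using part1 part2 by blast
qed

end
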